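(* Let $r\ge1$, $\ell\ge2$. (1) There is a ring homomorphism $\tilde\varphi_\ell:\mathcal{Y}_\ell(A_r)\to\widetilde{\mathcal{T}}_\ell(A_r)$ with $\tilde\varphi_\ell(Y^{(a)}_m(u))=\dfrac{T^{(a-1)}_m(u)T^{(a+1)}_m(u)}{T^{(a)}_{m-1}(u)T^{(a)}_{m+1}(u)}$ for $1\le a\le r$, $1\le m\le\ell-1$, $u\in\mathbb{Z}$. (2) There is a ring homomorphism $\psi_\ell:\widetilde{\mathcal{T}}_\ell(A_r)\to\mathcal{Y}_\ell(A_r)$ such that $\psi_\ell\circ\tilde\varphi_\ell=\mathrm{id}_{\mathcal{Y}_\ell(A_r)}$.
   Context: Rings are commutative with identity. $H=\{(a,m,u):0\le a\le r+1,\ 0\le m\le\ell,\ u\in\mathbb{Z}\}$. $\widetilde{\mathcal{T}}_\ell(A_r)$ is the ring with generators $T^{(a)}_m(u)^{\pm1}$, $(a,m,u)\in H$, and relations: (i) $T^{(a)}_m(u-1)T^{(a)}_m(u+1)=T^{(a)}_{m-1}(u)T^{(a)}_{m+1}(u)+T^{(a-1)}_m(u)T^{(a+1)}_m(u)$ for $1\le a\le r$, $1\le m\le\ell-1$, $u\in\mathbb{Z}$; (ii) (spiral boundary condition) $T^{(a)}_0(u+1)=T^{(a-1)}_0(u)$ ($1\le a\le r+1$), $T^{(a)}_\ell(u+1)=T^{(a+1)}_\ell(u)$ ($0\le a\le r$), $T^{(0)}_m(u+1)=T^{(0)}_{m+1}(u)$ ($0\le m\le\ell-1$), $T^{(r+1)}_m(u+1)=T^{(r+1)}_{m-1}(u)$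 ($1\le m\le\ell$). $\mathcal{Y}_\ell(A_r)$ is the ring with generators $Y^{(a)}_m(u)^{\pm1}$, $(1+Y^{(a)}_m(u))^{-1}$ ($1\le a\le r$, $1\le m\le\ell-1$, $u\in\mathbb{Z}$) and relations $Y^{(a)}_m(u-1)Y^{(a)}_m(u+1)=\dfrac{(1+Y^{(a-1)}_m(u))(1+Y^{(a+1)}_m(u))}{(1+Y^{(a)}_{m-1}(u)^{-1})(1+Y^{(a)}_{m+1}(u)^{-1})}$ for the same range, with $Y^{(0)}_m=Y^{(r+1)}_m=0$ and $Y^{(a)}_0(u)^{-1}=Y^{(a)}_\ell(u)^{-1}=0$. *)

theory Defs
  imports "HOL-Algebra.Ring"
begin

datatype 'g rexpr = Gen 'g | RZero | ROne | RAdd "'g rexpr" "'g rexpr"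
  | RNeg "'g rexpr" | RMul "'g rexpr" "'g rexpr"

fun gens :: "'g rexpr \<Rightarrow> 'g set" where
  "gens (Gen g) = {g}"
| "gens RZero = {}"
| "gens ROne = {}"
| "gens (RAdd x y) = gens x \<union> gens y"
| "gens (RNeg x) = gens x"
| "gens (RMul x y) = gens x \<union> gens y"

inductive req :: "('g rexpr \<times> 'g rexpr) set \<Rightarrow> 'g rexpr \<Rightarrow> 'g rexpr \<Rightarrow> bool"
  for R where
  rel: "(x, y) \<in> R \<Longrightarrow> req R x y"
| refl: "req R x x"
| sym: "req R x y \<Longrightarrow> req R y x"
| trans: "req R x y \<Longrightarrow> req R y z \<Longrightarrow> req R x z"
| add_cong: "req R x x' \<Longrightarrow> req R y y' \<Longrightarrow> req R (RAdd x y) (RAdd x' y')"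
| mul_cong: "req R x x' \<Longrightarrow> req R y y' \<Longrightarrow> req R (RMul x y) (RMul x' y')"
| neg_cong: "req R x x' \<Longrightarrow> req R (RNeg x) (RNeg x')"
| add_assoc: "req R (RAdd (RAdd x y) z) (RAdd x (RAdd y z))"
| add_comm: "req R (RAdd x y) (RAdd y x)"
| add_zero: "req R (RAdd RZero x) x"
| add_neg: "req R (RAdd (RNeg x) x) RZero"
| mul_assoc: "req R (RMul (RMul x y) z) (RMul x (RMul y z))"
| mul_comm: "req R (RMul x y) (RMul y x)"
| mul_one: "req R (RMul ROne x) x"
| distrib: "req R (RMul x (RAdd y z)) (RAdd (RMul x y) (RMul x z))"

definition rclass :: "('g rexpr \<times> 'g rexpr) set \<Rightarrow> 'g rexpr \<Rightarrow> 'g rexpr set" where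
  "rclass R e = {z. req R z e}"

definition presented_ring :: "'g set \<Rightarrow> ('g rexpr \<times> 'g rexpr) set \<Rightarrow> ('g rexpr set) ring" where
  "presented_ring G R =
    \<lparr>carrier = {rclass R e | e. gens e \<subseteq> G},
     mult = (\<lambda>X Y. {z. \<exists>x\<in>X. \<exists>y\<in>Y. req R z (RMul x y)}),
     one = rclass R ROne,
     zero = rclass R RZero,
     add = (\<lambda>X Y. {z. \<exists>x\<in>X. \<exists>y\<in>Y. req R z (RAdd x y)})\<rparr>"

datatype tgen = TG nat nat int | TGinv nat nat int

definition inH :: "nat \<Rightarrow> nat \<Rightarrow> nat \<Rightarrow> nat \<Rightarrow> bool" where
  "inH r l a m \<longleftrightarrow> a \<le> r + 1 \<and> m \<le> l"

definition Tgens :: "nat \<Rightarrow> nat \<Rightarrow> tgen set" where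
  "Tgens r l = {TG a m u | a m u. inH r l a m} \<union> {TGinv a m u | a m u. inH r l a m}"

abbreviation T :: "nat \<Rightarrow> nat \<Rightarrow> int \<Rightarrow> tgen rexpr" where
  "T a m u \<equiv> Gen (TG a m u)"

definition Trels :: "nat \<Rightarrow> nat \<Rightarrow> (tgen rexpr \<times> tgen rexpr) set" where
  "Trels r l =
     {(RMul (T a m u) (Gen (TGinv a m u)), ROne) | a m u. inH r l a m}
   \<union> {(RMul (T a m (u - 1)) (T a m (u + 1)),
        RAdd (RMul (T a (m - 1) u) (T a (m + 1) u)) (RMul (T (a - 1) m u) (T (a + 1) m u)))
       | a m u. 1 \<le> a \<and> a \<le> r \<and> 1 \<le> m \<and> m \<le> l - 1}
   \<union> {(T a 0 (u + 1), T (a - 1) 0 u) | a u. 1 \<le> a \<and> a \<le> r + 1}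
   \<union> {(T a l (u + 1), T (a + 1) l u) | a u. a \<le> r}
   \<union> {(T 0 m (u + 1), T 0 (m + 1) u) | m u. m \<le> l - 1}
   \<union> {(T (r + 1) m (u + 1), T (r + 1) (m - 1) u) | m u. 1 \<le> m \<and> m \<le> l}"

definition Tring :: "nat \<Rightarrow> nat \<Rightarrow> (tgen rexpr set) ring" where
  "Tring r l = presented_ring (Tgens r l) (Trels r l)"

definition Tcls :: "nat \<Rightarrow> nat \<Rightarrow> nat \<Rightarrow> nat \<Rightarrow> int \<Rightarrow> tgen rexpr set" where
  "Tcls r l a m u = rclass (Trels r l) (T a m u)"

text \<open>\<open>YG\<close> = \<open>Y\<close>, \<open>YGinv\<close> = \<open>Y^{-1}\<close>, \<open>WG\<close> = \<open>(1+Y)^{-1}\<close>.\<close>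
datatype ygen = YG nat nat int | YGinv nat nat int | WG nat nat int

definition inI :: "nat \<Rightarrow> nat \<Rightarrow> nat \<Rightarrow> nat \<Rightarrow> bool" where
  "inI r l a m \<longleftrightarrow> 1 \<le> a \<and> a \<le> r \<and> 1 \<le> m \<and> m \<le> l - 1"

definition Ygens :: "nat \<Rightarrow> nat \<Rightarrow> ygen set" where
  "Ygens r l = {YG a m u | a m u. inI r l a m} \<union> {YGinv a m u | a m u. inI r l a m}
     \<union> {WG a m u | a m u. inI r l a m}"

abbreviation Y :: "nat \<Rightarrow> nat \<Rightarrow> int \<Rightarrow> ygen rexpr" where
  "Y a m u \<equiv> Gen (YG a m u)"

text \<open>\<open>1 + Y^{(a)}_m(u)\<close>, with the convention \<open>Y^{(0)}_m = Y^{(r+1)}_m = 0\<close>.\<close>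
definition onePY :: "nat \<Rightarrow> nat \<Rightarrow> nat \<Rightarrow> nat \<Rightarrow> int \<Rightarrow> ygen rexpr" where
  "onePY r l a m u = (if a = 0 \<or> a = r + 1 then ROne else RAdd ROne (Y a m u))"

text \<open>\<open>(1 + Y^{(a)}_m(u)^{-1})^{-1} = Y^{(a)}_m(u) (1+Y^{(a)}_m(u))^{-1}\<close>, with the
  convention \<open>Y^{(a)}_0(u)^{-1} = Y^{(a)}_l(u)^{-1} = 0\<close>.\<close>
definition invOnePYinv :: "nat \<Rightarrow> nat \<Rightarrow> nat \<Rightarrow> nat \<Rightarrow> int \<Rightarrow> ygen rexpr" where
  "invOnePYinv r l a m u = (if m = 0 \<or> m = l then ROne else RMul (Y a m u) (Gen (WG a m u)))"

definition Yrels :: "nat \<Rightarrow> nat \<Rightarrow> (ygen rexpr \<times> ygen rexpr) set" where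
  "Yrels r l =
     {(RMul (Y a m u) (Gen (YGinv a m u)), ROne) | a m u. inI r l a m}
   \<union> {(RMul (RAdd ROne (Y a m u)) (Gen (WG a m u)), ROne) | a m u. inI r l a m}
   \<union> {(RMul (Y a m (u - 1)) (Y a m (u + 1)),
        RMul (RMul (onePY r l (a - 1) m u) (onePY r l (a + 1) m u))
             (RMul (invOnePYinv r l a (m - 1) u) (invOnePYinv r l a (m + 1) u)))
       | a m u. inI r l a m}"

definition Yring :: "nat \<Rightarrow> nat \<Rightarrow> (ygen rexpr set) ring" where
  "Yring r l = presented_ring (Ygens r l) (Yrels r l)"

definition Ycls :: "nat \<Rightarrow> nat \<Rightarrow> nat \<Rightarrow> nat \<Rightarrow> int \<Rightarrow> ygen rexpr set" where
  "Ycls r l a m u = rclass (Yrels r l) (Y a m u)"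

end

theory Submission
  imports Defs
begin



section \<open>Presented rings\<close>

lemma req_sym': "req R x y \<Longrightarrow> req R y x" by (rule req.sym)

lemma in_rclass[simp]: "z \<in> rclass R e \<longleftrightarrow> req R z e"
  by (simp add: rclass_def)

lemma rclass_eq_iff: "rclass R x = rclass R y \<longleftrightarrow> req R x y"
proof
  assume "rclass R x = rclass R y"
  then have "x \<in> rclass R y" using req.refl[of R x] by (auto simp: rclass_def)
  then show "req R x y" by simp
next
  assume h: "req R x y"
  show "rclass R x = rclass R y"
    using h by (auto simp: rclass_def intro: req.trans req.sym)
qed

lemma rclass_eqI: "req R x y \<Longrightarrow> rclass R x = rclass R y"
  by (simp add: rclass_eq_iff)

lemma pr_mult: "mult (presented_ring G R) (rclass R x) (rclass R y) = rclass R (RMul x y)"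
  unfolding presented_ring_def
  by (auto simp: rclass_def intro: req.refl req.trans req.mul_cong)

lemma pr_add: "add (presented_ring G R) (rclass R x) (rclass R y) = rclass R (RAdd x y)"
  unfolding presented_ring_def
  by (auto simp: rclass_def intro: req.refl req.trans req.add_cong)

lemma pr_one: "one (presented_ring G R) = rclass R ROne"
  unfolding presented_ring_def by simp

lemma pr_zero: "zero (presented_ring G R) = rclass R RZero"
  unfolding presented_ring_def by simp

lemma pr_carrier: "X \<in> carrier (presented_ring G R) \<longleftrightarrow> (\<exists>e. X = rclass R e \<and> gens e \<subseteq> G)"
  unfolding presented_ring_def by auto

lemma pr_carrierI: "gens e \<subseteq> G \<Longrightarrow> rclass R e \<in> carrier (presented_ring G R)"
  by (auto simp: pr_carrier)

lemma pr_carrierE: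
  assumes "X \<in> carrier (presented_ring G R)"
  obtains e where "X = rclass R e" "gens e \<subseteq> G"
  using assms by (auto simp: pr_carrier)

lemma pr_cring: "cring (presented_ring G R)"
proof -
  let ?P = "presented_ring G R"
  have C: "\<And>X. X \<in> carrier ?P \<Longrightarrow> \<exists>e. X = rclass R e \<and> gens e \<subseteq> G"
    by (simp add: pr_carrier)
  note M = pr_mult pr_add pr_one pr_zero
  show ?thesis
  proof (rule cringI)
    show "abelian_group ?P"
    proof (rule abelian_groupI)
      fix x y assume "x \<in> carrier ?P" "y \<in> carrier ?P"
      then obtain e f where "x = rclass R e" "gens e \<subseteq> G" "y = rclass R f" "gens f \<subseteq> G"
        by (auto simp: pr_carrier)
      then show "x \<oplus>\<^bsub>?P\<^esub> y \<in> carrier ?P"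
        by (auto simp: M pr_carrier intro!: exI[of _ "RAdd e f"])
    next
      show "\<zero>\<^bsub>?P\<^esub> \<in> carrier ?P" by (auto simp: M pr_carrier intro!: exI[of _ RZero])
    next
      fix x y z assume "x \<in> carrier ?P" "y \<in> carrier ?P" "z \<in> carrier ?P"
      then show "x \<oplus>\<^bsub>?P\<^esub> y \<oplus>\<^bsub>?P\<^esub> z = x \<oplus>\<^bsub>?P\<^esub> (y \<oplus>\<^bsub>?P\<^esub> z)"
        by (clarsimp simp: pr_carrier) (simp add: M rclass_eq_iff req.add_assoc)
    next
      fix x y assume "x \<in> carrier ?P" "y \<in> carrier ?P"
      then show "x \<oplus>\<^bsub>?P\<^esub> y = y \<oplus>\<^bsub>?P\<^esub> x"
        by (clarsimp simp: pr_carrier) (simp add: M rclass_eq_iff req.add_comm)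
    next
      fix x assume "x \<in> carrier ?P"
      then show "\<zero>\<^bsub>?P\<^esub> \<oplus>\<^bsub>?P\<^esub> x = x"
        by (clarsimp simp: pr_carrier) (simp add: M rclass_eq_iff req.add_zero)
    next
      fix x assume "x \<in> carrier ?P"
      then obtain e where e: "x = rclass R e" "gens e \<subseteq> G" by (auto simp: pr_carrier)
      show "\<exists>y\<in>carrier ?P. y \<oplus>\<^bsub>?P\<^esub> x = \<zero>\<^bsub>?P\<^esub>"
        using e by (intro bexI[of _ "rclass R (RNeg e)"]) (simp_all add: M rclass_eq_iff req.add_neg pr_carrierI)
    qed
  next
    show "comm_monoid ?P"
    proof (rule comm_monoidI)
      fix x y assume "x \<in> carrier ?P" "y \<in> carrier ?P"
      then obtain e f where "x = rclass R e" "gens e \<subseteq> G" "y = rclass R f" "gens f \<subseteq> G"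
        by (auto simp: pr_carrier)
      then show "x \<otimes>\<^bsub>?P\<^esub> y \<in> carrier ?P"
        by (auto simp: M pr_carrier intro!: exI[of _ "RMul e f"])
    next
      show "\<one>\<^bsub>?P\<^esub> \<in> carrier ?P" by (auto simp: M pr_carrier intro!: exI[of _ ROne])
    next
      fix x y z assume "x \<in> carrier ?P" "y \<in> carrier ?P" "z \<in> carrier ?P"
      then show "x \<otimes>\<^bsub>?P\<^esub> y \<otimes>\<^bsub>?P\<^esub> z = x \<otimes>\<^bsub>?P\<^esub> (y \<otimes>\<^bsub>?P\<^esub> z)"
        by (clarsimp simp: pr_carrier) (simp add: M rclass_eq_iff req.mul_assoc)
    next
      fix x assume "x \<in> carrier ?P"
      then show "\<one>\<^bsub>?P\<^esub> \<otimes>\<^bsub>?P\<^esub> x = x"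
        by (clarsimp simp: pr_carrier) (simp add: M rclass_eq_iff req.mul_one)
    next
      fix x y assume "x \<in> carrier ?P" "y \<in> carrier ?P"
      then show "x \<otimes>\<^bsub>?P\<^esub> y = y \<otimes>\<^bsub>?P\<^esub> x"
        by (clarsimp simp: pr_carrier) (simp add: M rclass_eq_iff req.mul_comm)
    qed
  next
    fix x y z assume "x \<in> carrier ?P" "y \<in> carrier ?P" "z \<in> carrier ?P"
    then show "(x \<oplus>\<^bsub>?P\<^esub> y) \<otimes>\<^bsub>?P\<^esub> z = x \<otimes>\<^bsub>?P\<^esub> z \<oplus>\<^bsub>?P\<^esub> y \<otimes>\<^bsub>?P\<^esub> z"
      by (clarsimp simp: pr_carrier) (simp add: M rclass_eq_iff,
          meson req.trans req.mul_comm req.distrib req.add_cong)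
  qed
qed

primrec evalr :: "('a, 'b) ring_scheme \<Rightarrow> ('g \<Rightarrow> 'a) \<Rightarrow> 'g rexpr \<Rightarrow> 'a" where
  "evalr S h (Gen g) = h g"
| "evalr S h RZero = \<zero>\<^bsub>S\<^esub>"
| "evalr S h ROne = \<one>\<^bsub>S\<^esub>"
| "evalr S h (RAdd x y) = evalr S h x \<oplus>\<^bsub>S\<^esub> evalr S h y"
| "evalr S h (RNeg x) = \<ominus>\<^bsub>S\<^esub> evalr S h x"
| "evalr S h (RMul x y) = evalr S h x \<otimes>\<^bsub>S\<^esub> evalr S h y"

lemma (in cring) evalr_closed:
  assumes "\<And>g. h g \<in> carrier R"
  shows "evalr R h e \<in> carrier R"
  by (induction e) (auto simp: assms)

lemma (in cring) evalr_req:
  assumes h: "\<And>g. h g \<in> carrier R"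
    and rel: "\<And>x y. (x, y) \<in> Rl \<Longrightarrow> evalr R h x = evalr R h y"
    and "req Rl x y"
  shows "evalr R h x = evalr R h y"
  using assms(3)
proof (induction rule: req.induct)
  case (rel x y) then show ?case by (rule assms(2))
qed (auto simp: evalr_closed[OF h] a_ac m_ac r_distr l_neg r_neg)

definition liftr :: "('a, 'b) ring_scheme \<Rightarrow> ('g rexpr \<times> 'g rexpr) set \<Rightarrow> ('g \<Rightarrow> 'a) \<Rightarrow> 'g rexpr set \<Rightarrow> 'a" where
  "liftr S Rl h X = evalr S h (SOME e. e \<in> X)"

lemma (in cring) liftr_class:
  assumes h: "\<And>g. h g \<in> carrier R"
    and rel: "\<And>x y. (x, y) \<in> Rl \<Longrightarrow> evalr R h x = evalr R h y"
  shows "liftr R Rl h (rclass Rl e) = evalr R h e"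
proof -
  have "(SOME e'. e' \<in> rclass Rl e) \<in> rclass Rl e"
    by (rule someI[of _ e]) (simp add: req.refl)
  then have "req Rl (SOME e'. e' \<in> rclass Rl e) e" by simp
  from evalr_req[OF h rel this] show ?thesis unfolding liftr_def .
qed

lemma (in cring) liftr_hom:
  assumes h: "\<And>g. h g \<in> carrier R"
    and rel: "\<And>x y. (x, y) \<in> Rl \<Longrightarrow> evalr R h x = evalr R h y"
  shows "liftr R Rl h \<in> ring_hom (presented_ring G Rl) R"
proof (rule ring_hom_memI)
  fix x assume "x \<in> carrier (presented_ring G Rl)"
  then obtain e where "x = rclass Rl e" by (auto elim: pr_carrierE)
  then show "liftr R Rl h x \<in> carrier R" by (simp add: liftr_class[OF h rel] evalr_closed[OF h])
next
  fix x y assume "x \<in> carrier (presented_ring G Rl)" "y \<in> carrier (presented_ring G Rl)"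
  then obtain e f where "x = rclass Rl e" "y = rclass Rl f" by (auto elim!: pr_carrierE)
  then show "liftr R Rl h (x \<otimes>\<^bsub>presented_ring G Rl\<^esub> y) = liftr R Rl h x \<otimes> liftr R Rl h y"
    "liftr R Rl h (x \<oplus>\<^bsub>presented_ring G Rl\<^esub> y) = liftr R Rl h x \<oplus> liftr R Rl h y"
    by (simp_all add: pr_mult pr_add liftr_class[OF h rel])
next
  show "liftr R Rl h \<one>\<^bsub>presented_ring G Rl\<^esub> = \<one>"
    by (simp add: pr_one liftr_class[OF h rel])
qed

lemma pr_hom_ext_id:
  assumes f: "f \<in> ring_hom (presented_ring G Rl) (presented_ring G Rl)"
    and gen: "\<And>g. g \<in> G \<Longrightarrow> f (rclass Rl (Gen g)) = rclass Rl (Gen g)"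
    and X: "X \<in> carrier (presented_ring G Rl)"
  shows "f X = X"
proof -
  let ?P = "presented_ring G Rl"
  interpret P: cring ?P by (rule pr_cring)
  interpret H: ring_hom_cring ?P ?P f
    by (intro ring_hom_cring.intro P.cring_axioms ring_hom_cring_axioms.intro f)
  have "gens e \<subseteq> G \<Longrightarrow> f (rclass Rl e) = rclass Rl e" for e
  proof (induction e)
    case (Gen g) then show ?case by (simp add: gen)
  next
    case RZero
    have "f \<zero>\<^bsub>?P\<^esub> = \<zero>\<^bsub>?P\<^esub>" by simp
    then show ?case by (simp add: pr_zero)
  next
    case ROne
    have "f \<one>\<^bsub>?P\<^esub> = \<one>\<^bsub>?P\<^esub>" by simp
    then show ?case by (simp add: pr_one)
  next
    case (RAdd x y)
    then have c: "rclass Rl x \<in> carrier ?P" "rclass Rl y \<in> carrier ?P" by (auto intro: pr_carrierI)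
    have "f (rclass Rl x \<oplus>\<^bsub>?P\<^esub> rclass Rl y) = f (rclass Rl x) \<oplus>\<^bsub>?P\<^esub> f (rclass Rl y)"
      using c by simp
    then show ?case using RAdd by (simp add: pr_add)
  next
    case (RMul x y)
    then have c: "rclass Rl x \<in> carrier ?P" "rclass Rl y \<in> carrier ?P" by (auto intro: pr_carrierI)
    have "f (rclass Rl x \<otimes>\<^bsub>?P\<^esub> rclass Rl y) = f (rclass Rl x) \<otimes>\<^bsub>?P\<^esub> f (rclass Rl y)"
      using c by simp
    then show ?case using RMul by (simp add: pr_mult)
  next
    case (RNeg x)
    then have c: "rclass Rl x \<in> carrier ?P" by (auto intro: pr_carrierI)
    have neg: "\<ominus>\<^bsub>?P\<^esub> rclass Rl x = rclass Rl (RNeg x)"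
    proof -
      have "rclass Rl (RNeg x) \<in> carrier ?P" using RNeg by (intro pr_carrierI) simp
      moreover have "rclass Rl (RNeg x) \<oplus>\<^bsub>?P\<^esub> rclass Rl x = \<zero>\<^bsub>?P\<^esub>"
        by (simp add: pr_add pr_zero rclass_eq_iff req.add_neg)
      ultimately show ?thesis using c
        by (metis P.l_neg P.minus_equality)
    qed
    have "f (\<ominus>\<^bsub>?P\<^esub> rclass Rl x) = \<ominus>\<^bsub>?P\<^esub> f (rclass Rl x)" using c by (simp add: H.hom_a_inv)
    then show ?case using RNeg by (simp add: neg)
  qed
  then show ?thesis using X by (auto elim: pr_carrierE)
qed




context cring begin

lemma inv_mult_units:
  assumes "b \<in> Units R" "d \<in> Units R"
  shows "inv (b \<otimes> d) = inv b \<otimes> inv d"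
proof (rule comm_inv_char)
  have "(b \<otimes> d) \<otimes> (inv b \<otimes> inv d) = (b \<otimes> inv b) \<otimes> (d \<otimes> inv d)"
    using assms by (simp add: m_ac Units_closed del: Units_r_inv Units_l_inv)
  also have "\<dots> = \<one>" using assms by simp
  finally show "(b \<otimes> d) \<otimes> (inv b \<otimes> inv d) = \<one>" .
qed (use assms in auto)

lemma frac_mult:
  assumes "a \<in> carrier R" "c \<in> carrier R" "b \<in> Units R" "d \<in> Units R"
  shows "(a \<otimes> inv b) \<otimes> (c \<otimes> inv d) = (a \<otimes> c) \<otimes> inv (b \<otimes> d)"
  using assms by (simp add: inv_mult_units m_ac Units_closed del: Units_r_inv Units_l_inv)

lemma unit_div_cancel:
  assumes "y \<in> carrier R" "x \<in> Units R"
  shows "(y \<otimes> inv x) \<otimes> x = y" "x \<otimes> (y \<otimes> inv x) = y" "(y \<otimes> x) \<otimes> inv x = y"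
proof -
  have "(y \<otimes> x) \<otimes> inv x = y \<otimes> (x \<otimes> inv x)"
    using assms by (simp add: m_assoc Units_closed)
  then show "(y \<otimes> x) \<otimes> inv x = y" using assms by (simp add: Units_closed)
  have "(y \<otimes> inv x) \<otimes> x = y \<otimes> (inv x \<otimes> x)"
    using assms by (simp add: m_assoc Units_closed)
  then show "(y \<otimes> inv x) \<otimes> x = y" using assms by (simp add: Units_closed)
  then show "x \<otimes> (y \<otimes> inv x) = y" using assms by (simp add: m_comm Units_closed)
qed

lemma frac_eq:
  assumes "a \<in> carrier R" "c \<in> carrier R" "b \<in> Units R" "d \<in> Units R"
  shows "a \<otimes> inv b = c \<otimes> inv d \<longleftrightarrow> a \<otimes> d = c \<otimes> b"
proof
  assume h: "a \<otimes> inv b = c \<otimes> inv d"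
  have "a \<otimes> d = ((a \<otimes> inv b) \<otimes> b) \<otimes> d"
    using assms by (simp add: unit_div_cancel)
  also have "\<dots> = ((c \<otimes> inv d) \<otimes> d) \<otimes> b" using assms
    by (simp add: h m_ac Units_closed)
  also have "\<dots> = c \<otimes> b" using assms by (simp add: unit_div_cancel)
  finally show "a \<otimes> d = c \<otimes> b" .
next
  assume h: "a \<otimes> d = c \<otimes> b"
  have "a \<otimes> inv b = ((a \<otimes> d) \<otimes> inv d) \<otimes> inv b"
    using assms by (simp add: unit_div_cancel Units_closed)
  also have "\<dots> = ((c \<otimes> b) \<otimes> inv b) \<otimes> inv d" using assms
    by (simp add: h m_ac Units_closed)
  also have "\<dots> = c \<otimes> inv d" using assms by (simp add: unit_div_cancel Units_closed)
  finally show "a \<otimes> inv b = c \<otimes> inv d" .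
qed

lemma six_frac:
  assumes c: "n1 \<in> carrier R" "n2 \<in> carrier R" "p1 \<in> carrier R" "p2 \<in> carrier R"
      "j1 \<in> carrier R" "j2 \<in> carrier R"
    and u: "d1 \<in> Units R" "d2 \<in> Units R" "q1 \<in> Units R" "q2 \<in> Units R"
      "k1 \<in> Units R" "k2 \<in> Units R"
    and e: "(n1 \<otimes> n2) \<otimes> ((q1 \<otimes> q2) \<otimes> (k1 \<otimes> k2)) =
            ((p1 \<otimes> p2) \<otimes> (j1 \<otimes> j2)) \<otimes> (d1 \<otimes> d2)"
  shows "(n1 \<otimes> inv d1) \<otimes> (n2 \<otimes> inv d2) =
    ((p1 \<otimes> inv q1) \<otimes> (p2 \<otimes> inv q2)) \<otimes> ((j1 \<otimes> inv k1) \<otimes> (j2 \<otimes> inv k2))"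
proof -
  have "(n1 \<otimes> inv d1) \<otimes> (n2 \<otimes> inv d2) = (n1 \<otimes> n2) \<otimes> inv (d1 \<otimes> d2)"
    using c u by (simp add: frac_mult)
  moreover have "((p1 \<otimes> inv q1) \<otimes> (p2 \<otimes> inv q2)) \<otimes> ((j1 \<otimes> inv k1) \<otimes> (j2 \<otimes> inv k2))
      = ((p1 \<otimes> p2) \<otimes> (j1 \<otimes> j2)) \<otimes> inv ((q1 \<otimes> q2) \<otimes> (k1 \<otimes> k2))"
    using c u by (simp add: frac_mult del: Units_r_inv Units_l_inv)
  moreover have "(n1 \<otimes> n2) \<otimes> inv (d1 \<otimes> d2) = ((p1 \<otimes> p2) \<otimes> (j1 \<otimes> j2)) \<otimes> inv ((q1 \<otimes> q2) \<otimes> (k1 \<otimes> k2))"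
    using c u e by (subst frac_eq) simp_all
  ultimately show ?thesis by simp
qed

lemma ident12:
  assumes "A1 \<in> carrier R" "A2 \<in> carrier R" "A3 \<in> carrier R" "A4 \<in> carrier R"
    "B1 \<in> carrier R" "B2 \<in> carrier R" "B3 \<in> carrier R" "B4 \<in> carrier R"
    "C1 \<in> carrier R" "C2 \<in> carrier R" "C3 \<in> carrier R" "C4 \<in> carrier R"
  shows "((A1 \<otimes> A2) \<otimes> (B1 \<otimes> B2)) \<otimes> (((C1 \<otimes> C2) \<otimes> (C3 \<otimes> C4)) \<otimes> ((A3 \<otimes> B3) \<otimes> (A4 \<otimes> B4))) =
    (((A1 \<otimes> B1) \<otimes> (A2 \<otimes> B2)) \<otimes> ((C1 \<otimes> C3) \<otimes> (C2 \<otimes> C4))) \<otimes> ((A3 \<otimes> A4) \<otimes> (B3 \<otimes> B4))"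
  using assms by algebra

lemma frac_cancel:
  assumes "n \<in> carrier R" "d \<in> Units R" "x \<in> Units R"
  shows "(n \<otimes> inv d) \<otimes> (d \<otimes> inv x) = n \<otimes> inv x"
proof -
  have "(n \<otimes> inv d) \<otimes> (d \<otimes> inv x) = n \<otimes> (d \<otimes> inv d) \<otimes> inv x"
    using assms by (simp add: m_ac Units_closed del: Units_r_inv Units_l_inv)
  also have "\<dots> = n \<otimes> inv x" using assms by (simp add: Units_closed)
  finally show ?thesis .
qed

lemma frac_unit: "a \<in> Units R \<Longrightarrow> b \<in> Units R \<Longrightarrow> a \<otimes> inv b \<in> Units R"
  by simp

lemma frac_one_plus:
  assumes "n \<in> carrier R" "d \<in> Units R"
  shows "\<one> \<oplus> n \<otimes> inv d = (d \<oplus> n) \<otimes> inv d"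
  using assms by (simp add: l_distr Units_closed)

lemma unit_cancel:
  assumes "x \<in> Units R" "a \<in> carrier R" "b \<in> carrier R" "x \<otimes> a = x \<otimes> b"
  shows "a = b"
  using assms by simp

lemma inv_eqI:
  assumes "x \<in> carrier R" "y \<in> carrier R" "x \<otimes> y = \<one>"
  shows "y = inv x" "x \<in> Units R"
proof -
  show "x \<in> Units R" using assms unfolding Units_def by (auto intro!: bexI[of _ y] simp: m_comm)
  show "y = inv x" using assms comm_inv_char by simp
qed

lemma inv_frac:
  assumes "b \<in> Units R" "d \<in> Units R"
  shows "inv (b \<otimes> inv d) = d \<otimes> inv b"
proof -
  have "(b \<otimes> inv d) \<otimes> (d \<otimes> inv b) = \<one>"
    using assms frac_mult[of b d d b] by (simp add: Units_closed m_comm)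
  then show ?thesis using assms by (intro inv_eqI(1)[symmetric]) (auto simp: Units_closed)
qed

end

lemma ring_hom_inv:
  assumes "cring R" "cring S" "h \<in> ring_hom R S" "x \<in> Units R"
  shows "h (inv\<^bsub>R\<^esub> x) = inv\<^bsub>S\<^esub> (h x)"
proof -
  interpret R: cring R by fact
  interpret S: cring S by fact
  have c: "x \<in> carrier R" "inv\<^bsub>R\<^esub> x \<in> carrier R" using assms by auto
  have "h x \<otimes>\<^bsub>S\<^esub> h (inv\<^bsub>R\<^esub> x) = \<one>\<^bsub>S\<^esub>"
  proof -
    have "h x \<otimes>\<^bsub>S\<^esub> h (inv\<^bsub>R\<^esub> x) = h (x \<otimes>\<^bsub>R\<^esub> inv\<^bsub>R\<^esub> x)"
      by (rule ring_hom_mult[OF assms(3) c, symmetric])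
    then show ?thesis using assms by (simp add: ring_hom_one)
  qed
  then show ?thesis using c assms(3) by (intro S.inv_eqI(1)) (auto simp: ring_hom_closed)
qed

section \<open>The map phi\<close>

locale tsys = cring S for S (structure) +
  fixes r l :: nat and T :: "nat \<Rightarrow> nat \<Rightarrow> int \<Rightarrow> 'a"
  assumes rl: "1 \<le> r" "2 \<le> l"
  and T_unit: "\<And>a m u. T a m u \<in> Units S"
  and tsys: "\<And>a m u. 1 \<le> a \<Longrightarrow> a \<le> r \<Longrightarrow> 1 \<le> m \<Longrightarrow> m \<le> l-1 \<Longrightarrow>
      T a m (u-1) \<otimes> T a m (u+1) = T a (m-1) u \<otimes> T a (m+1) u \<oplus> T (a-1) m u \<otimes> T (a+1) m u"
  and sp1: "\<And>a u. 1 \<le> a \<Longrightarrow> a \<le> r+1 \<Longrightarrow> T a 0 (u+1) = T (a-1) 0 u"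
  and sp2: "\<And>a u. a \<le> r \<Longrightarrow> T a l (u+1) = T (a+1) l u"
  and sp3: "\<And>m u. m \<le> l-1 \<Longrightarrow> T 0 m (u+1) = T 0 (m+1) u"
  and sp4: "\<And>m u. 1 \<le> m \<Longrightarrow> m \<le> l \<Longrightarrow> T (r+1) m (u+1) = T (r+1) (m-1) u"
begin

definition pY where
  "pY a m u = (T (a-1) m u \<otimes> T (a+1) m u) \<otimes> inv (T a (m-1) u \<otimes> T a (m+1) u)"
definition pYi where
  "pYi a m u = (T a (m-1) u \<otimes> T a (m+1) u) \<otimes> inv (T (a-1) m u \<otimes> T (a+1) m u)"
definition pW where
  "pW a m u = inv (\<one> \<oplus> pY a m u)"
definition pP where
  "pP a m u = (if a = 0 \<or> a = r + 1 then \<one> else \<one> \<oplus> pY a m u)"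
definition pJ where
  "pJ a m u = (if m = 0 \<or> m = l then \<one> else pY a m u \<otimes> pW a m u)"

lemma TU[simp]: "T a m u \<in> Units S"
  by (rule T_unit)
lemma TC[simp]: "T a m u \<in> carrier S"
  by (rule Units_closed[OF T_unit])

lemma onepY:
  assumes "1 \<le> a" "a \<le> r" "1 \<le> m" "m \<le> l-1"
  shows "\<one> \<oplus> pY a m u = (T a m (u-1) \<otimes> T a m (u+1)) \<otimes> inv (T a (m-1) u \<otimes> T a (m+1) u)"
proof -
  have u: "T a (m-1) u \<otimes> T a (m+1) u \<in> Units S" using assms by simp
  have c: "T (a-1) m u \<otimes> T (a+1) m u \<in> carrier S" using assms by simp
  have "\<one> \<oplus> pY a m u = (T a (m-1) u \<otimes> T a (m+1) u \<oplus> T (a-1) m u \<otimes> T (a+1) m u)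
      \<otimes> inv (T a (m-1) u \<otimes> T a (m+1) u)"
    unfolding pY_def by (rule frac_one_plus[OF c u])
  then show ?thesis by (simp only: tsys[OF assms])
qed

lemma onepY_unit:
  assumes "1 \<le> a" "a \<le> r" "1 \<le> m" "m \<le> l-1"
  shows "\<one> \<oplus> pY a m u \<in> Units S"
  using assms by (simp add: onepY)

lemma pY_unit:
  assumes "1 \<le> a" "a \<le> r" "1 \<le> m" "m \<le> l-1"
  shows "pY a m u \<in> Units S"
  using assms by (simp add: pY_def)

lemma pP_eq:
  assumes "a \<le> r+1" "1 \<le> m" "m \<le> l-1"
  shows "pP a m u = (T a m (u-1) \<otimes> T a m (u+1)) \<otimes> inv (T a (m-1) u \<otimes> T a (m+1) u)"
proof (cases "a = 0 \<or> a = r+1")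
  case True
  have e: "T a m (u-1) \<otimes> T a m (u+1) = T a (m-1) u \<otimes> T a (m+1) u"
  proof (cases "a = 0")
    case True
    have "T 0 (m-1) ((u-1)+1) = T 0 (m-1+1) (u-1)" using assms by (intro sp3) simp
    moreover have "T 0 m (u+1) = T 0 (m+1) u" using assms by (intro sp3) simp
    ultimately show ?thesis using True assms by (simp add: m_comm)
  next
    case False
    then have a: "a = r+1" using \<open>a = 0 \<or> a = r+1\<close> by simp
    have "T (r+1) (m+1) ((u-1)+1) = T (r+1) (m+1-1) (u-1)" using assms by (intro sp4) simp_all
    moreover have "T (r+1) m (u+1) = T (r+1) (m-1) u" using assms by (intro sp4) simp_all
    ultimately show ?thesis using a assms by (simp add: m_comm)
  qed
  have "T a (m-1) u \<otimes> T a (m+1) u \<in> Units S" using assms by simp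
  then show ?thesis using True by (simp add: pP_def e)
next
  case False
  then show ?thesis using assms by (simp add: pP_def onepY)
qed

lemma pJ_eq:
  assumes "1 \<le> a" "a \<le> r" "m \<le> l"
  shows "pJ a m u = (T (a-1) m u \<otimes> T (a+1) m u) \<otimes> inv (T a m (u-1) \<otimes> T a m (u+1))"
proof (cases "m = 0 \<or> m = l")
  case True
  have e: "T a m (u-1) \<otimes> T a m (u+1) = T (a-1) m u \<otimes> T (a+1) m u"
  proof (cases "m = 0")
    case True
    have "T (a+1) 0 ((u-1)+1) = T (a+1-1) 0 (u-1)" using assms by (intro sp1) simp_all
    moreover have "T a 0 (u+1) = T (a-1) 0 u" using assms by (intro sp1) simp_all
    ultimately show ?thesis using True assms by (simp add: m_comm)
  next
    case False
    then have mm: "m = l" using \<open>m = 0 \<or> m = l\<close> by simp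
    have "T (a-1) l ((u-1)+1) = T (a-1+1) l (u-1)" using assms by (intro sp2) simp
    moreover have "T a l (u+1) = T (a+1) l u" using assms by (intro sp2) simp
    ultimately show ?thesis using mm assms by (simp add: m_comm)
  qed
  have "T a m (u-1) \<otimes> T a m (u+1) \<in> Units S" using assms by simp
  then show ?thesis using True by (simp add: pJ_def e)
next
  case False
  then have m: "1 \<le> m" "m \<le> l - 1" using assms by auto
  have u1: "T a (m-1) u \<otimes> T a (m+1) u \<in> Units S" using assms m by simp
  have u2: "T a m (u-1) \<otimes> T a m (u+1) \<in> Units S" using assms m by simp
  have c: "T (a-1) m u \<otimes> T (a+1) m u \<in> carrier S" using assms m by simp
  have "pY a m u \<otimes> pW a m u =
      ((T (a-1) m u \<otimes> T (a+1) m u) \<otimes> inv (T a (m-1) u \<otimes> T a (m+1) u)) \<otimes>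
      ((T a (m-1) u \<otimes> T a (m+1) u) \<otimes> inv (T a m (u-1) \<otimes> T a m (u+1)))"
    unfolding pW_def onepY[OF assms(1,2) m] inv_frac[OF u2 u1] by (simp only: pY_def)
  also have "\<dots> = (T (a-1) m u \<otimes> T (a+1) m u) \<otimes> inv (T a m (u-1) \<otimes> T a m (u+1))"
    by (rule frac_cancel[OF c u1 u2])
  finally show ?thesis using False by (simp add: pJ_def)
qed

lemma Ysys_phi:
  assumes "1 \<le> a" "a \<le> r" "1 \<le> m" "m \<le> l-1"
  shows "pY a m (u-1) \<otimes> pY a m (u+1) =
     (pP (a-1) m u \<otimes> pP (a+1) m u) \<otimes> (pJ a (m-1) u \<otimes> pJ a (m+1) u)"
proof -
  have i: "a - 1 \<le> r + 1" "a + 1 \<le> r + 1" "m - 1 \<le> l" "m + 1 \<le> l" using assms by auto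
  show ?thesis
    unfolding pP_eq[OF i(1) assms(3,4)] pP_eq[OF i(2) assms(3,4)] pJ_eq[OF assms(1,2) i(3)]
      pJ_eq[OF assms(1,2) i(4)] pY_def
    apply (rule six_frac)
                prefer 13 apply (rule ident12)
    by simp_all
qed

end




section \<open>The map psi\<close>

definition yP :: "('a, 'b) ring_scheme \<Rightarrow> nat \<Rightarrow> (nat \<Rightarrow> nat \<Rightarrow> int \<Rightarrow> 'a) \<Rightarrow> nat \<Rightarrow> nat \<Rightarrow> int \<Rightarrow> 'a" where
  "yP S r Yv a m u = (if a = 0 \<or> a = r + 1 then \<one>\<^bsub>S\<^esub> else \<one>\<^bsub>S\<^esub> \<oplus>\<^bsub>S\<^esub> Yv a m u)"

definition yJ :: "('a, 'b) ring_scheme \<Rightarrow> nat \<Rightarrow> (nat \<Rightarrow> nat \<Rightarrow> int \<Rightarrow> 'a) \<Rightarrow> nat \<Rightarrow> nat \<Rightarrow> int \<Rightarrow> 'a" where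
  "yJ S l Yv a m u = (if m = 0 \<or> m = l then \<one>\<^bsub>S\<^esub> else Yv a m u \<otimes>\<^bsub>S\<^esub> inv\<^bsub>S\<^esub> (\<one>\<^bsub>S\<^esub> \<oplus>\<^bsub>S\<^esub> Yv a m u))"

definition intr :: "nat \<Rightarrow> nat \<Rightarrow> nat \<Rightarrow> nat \<Rightarrow> bool" where
  "intr r l a m \<longleftrightarrow> 1 \<le> a \<and> a \<le> r \<and> 1 \<le> m \<and> m + 1 \<le> l"

locale ysys = cring S for S (structure) +
  fixes r l :: nat and Yv :: "nat \<Rightarrow> nat \<Rightarrow> int \<Rightarrow> 'a"
  assumes rl: "1 \<le> r" "2 \<le> l"
  and Y_unit: "\<And>a m u. Yv a m u \<in> Units S"
  and P_unit: "\<And>a m u. intr r l a m \<Longrightarrow> \<one> \<oplus> Yv a m u \<in> Units S"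
  and ysys: "\<And>a m u. intr r l a m \<Longrightarrow>
      Yv a m (u-1) \<otimes> Yv a m (u+1) = (yP S r Yv (a-1) m u \<otimes> yP S r Yv (a+1) m u) \<otimes> (yJ S l Yv a (m-1) u \<otimes> yJ S l Yv a (m+1) u)"
begin

lemma YU[simp]: "Yv a m u \<in> Units S" by (rule Y_unit)
lemma YC[simp]: "Yv a m u \<in> carrier S" by (rule Units_closed[OF Y_unit])

definition Yi :: "int \<Rightarrow> nat \<Rightarrow> int \<Rightarrow> 'a" where
  "Yi a m u = (if 1 \<le> a \<and> a \<le> int r \<and> 1 \<le> m \<and> m + 1 \<le> l then Yv (nat a) m u else \<one>)"

lemma YiU[simp]: "Yi a m u \<in> Units S" by (simp add: Yi_def)

fun K :: "int \<Rightarrow> nat \<Rightarrow> int \<Rightarrow> 'a" where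
  "K u 0 a = \<one>"
| "K u (Suc 0) a = \<one>"
| "K u (Suc (Suc m)) a = ((K u (Suc m) (a-1) \<otimes> K u (Suc m) (a+1)) \<otimes> Yi a (Suc m) u) \<otimes> inv (K u m a)"

lemma KU[simp]: "K u m a \<in> Units S"
  by (induction u m a rule: K.induct) simp_all

lemma KC[simp]: "K u m a \<in> carrier S"
  by (rule Units_closed[OF KU])

lemma K_rec:
  assumes "1 \<le> m"
  shows "K u (m+1) a \<otimes> K u (m-1) a = (K u m (a-1) \<otimes> K u m (a+1)) \<otimes> Yi a m u"
proof -
  obtain n where n: "m = Suc n" using assms by (cases m) auto
  have "K u (Suc (Suc n)) a \<otimes> K u n a = ((K u (Suc n) (a-1) \<otimes> K u (Suc n) (a+1)) \<otimes> Yi a (Suc n) u)"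
    by (simp only: K.simps unit_div_cancel(1)[OF _ KU] m_closed KC Units_closed[OF YiU])
  then show ?thesis using n by simp
qed

definition mns :: "nat \<Rightarrow> bool" where
  "mns \<alpha> \<longleftrightarrow> (2 \<le> \<alpha> \<and> \<alpha> \<le> r) \<or> (r + 3 \<le> \<alpha> \<and> \<alpha> \<le> r + l)"
definition pls :: "nat \<Rightarrow> bool" where
  "pls \<alpha> \<longleftrightarrow> (1 \<le> \<alpha> \<and> \<alpha> + 2 \<le> l) \<or> (l + 1 \<le> \<alpha> \<and> \<alpha> + 1 \<le> l + r)"
definition cm :: "nat \<Rightarrow> 'a" where
  "cm \<alpha> = (if r + 3 \<le> \<alpha> \<and> \<alpha> \<le> r + l
     then K 1 (\<alpha> - r - 1) (int r + 1) \<otimes> inv (K 0 (\<alpha> - r - 2) (int r + 1)) else \<one>)"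
definition cp :: "nat \<Rightarrow> 'a" where
  "cp \<alpha> = (if 1 \<le> \<alpha> \<and> \<alpha> + 2 \<le> l then K 1 \<alpha> 0 \<otimes> inv (K 0 (\<alpha> + 1) 0)
     else if l + 1 \<le> \<alpha> \<and> \<alpha> + 1 \<le> l + r then K 1 l (int (\<alpha> - l)) \<otimes> inv (K 0 l (int (\<alpha> - l) + 1))
     else \<one>)"

lemma cmU[simp]: "cm \<alpha> \<in> Units S" by (simp add: cm_def)
lemma cpU[simp]: "cp \<alpha> \<in> Units S" by (simp add: cp_def)

fun F0 :: "nat \<Rightarrow> 'a" where
  "F0 0 = \<one>"
| "F0 (Suc \<alpha>) = (if pls \<alpha> then (if mns \<alpha> then F0 (\<alpha> - 1) \<otimes> cm \<alpha> else \<one>) \<otimes> inv (cp \<alpha>) else \<one>)"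

definition F1 :: "nat \<Rightarrow> 'a" where
  "F1 \<alpha> = (if mns \<alpha> then F0 (\<alpha> - 1) \<otimes> cm \<alpha> else \<one>)"

lemma F0U[simp]: "F0 \<alpha> \<in> Units S"
  by (induction \<alpha> rule: F0.induct) simp_all

lemma F1U[simp]: "F1 \<alpha> \<in> Units S" by (simp add: F1_def)
lemma F0C[simp]: "F0 \<alpha> \<in> carrier S" by (rule Units_closed[OF F0U])
lemma F1C[simp]: "F1 \<alpha> \<in> carrier S" by (rule Units_closed[OF F1U])
declare F0.simps(2)[simp del]

lemma F0_Suc: "pls \<alpha> \<Longrightarrow> F0 (Suc \<alpha>) = F1 \<alpha> \<otimes> inv (cp \<alpha>)"
  by (simp add: F1_def F0.simps(2))

definition FF :: "int \<Rightarrow> nat \<Rightarrow> 'a" where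
  "FF u = (if u = 0 then F0 else F1)"

lemma FFU[simp]: "FF u \<alpha> \<in> Units S" by (simp add: FF_def)
lemma FFC[simp]: "FF u \<alpha> \<in> carrier S" by (rule Units_closed[OF FFU])

definition tt :: "int \<Rightarrow> nat \<Rightarrow> nat \<Rightarrow> 'a" where
  "tt u a m = FF u (a + m) \<otimes> inv (K u m (int a))"

lemma ttU[simp]: "tt u a m \<in> Units S" by (simp add: tt_def)
lemma ttC[simp]: "tt u a m \<in> carrier S" by (rule Units_closed[OF ttU])

lemma frac_cancel2:
  assumes "n \<in> carrier S" "d \<in> Units S" "x \<in> Units S"
  shows "(n \<otimes> (d \<otimes> inv x)) \<otimes> inv d = n \<otimes> inv x"
proof -
  have "(n \<otimes> (d \<otimes> inv x)) \<otimes> inv d = n \<otimes> (d \<otimes> inv d) \<otimes> inv x"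
    using assms by (simp add: m_ac Units_closed del: Units_r_inv Units_l_inv)
  also have "\<dots> = n \<otimes> inv x" using assms by (simp add: Units_closed)
  finally show ?thesis .
qed

lemma tt_A:
  assumes "intr r l a m"
  shows "tt u (a-1) m \<otimes> tt u (a+1) m = Yv a m u \<otimes> (tt u a (m-1) \<otimes> tt u a (m+1))"
proof -
  from assms have a: "1 \<le> a" "a \<le> r" "1 \<le> m" "m + 1 \<le> l" by (auto simp: intr_def)
  have i1: "a - 1 + m = a + (m - 1)" "a + 1 + m = a + (m + 1)" using a by auto
  have i2: "int (a - 1) = int a - 1" "int (a + 1) = int a + 1" using a by auto
  have yi: "Yi (int a) m u = Yv a m u" using a by (simp add: Yi_def)
  have kr: "K u (m+1) (int a) \<otimes> K u (m-1) (int a) = (K u m (int a - 1) \<otimes> K u m (int a + 1)) \<otimes> Yv a m u"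
    using K_rec[OF a(3), of u "int a"] yi by simp
  define f1 where "f1 = FF u (a + (m - 1))"
  define f2 where "f2 = FF u (a + (m + 1))"
  define k1 where "k1 = K u m (int a - 1)"
  define k2 where "k2 = K u m (int a + 1)"
  define k3 where "k3 = K u (m-1) (int a)"
  define k4 where "k4 = K u (m+1) (int a)"
  define y where "y = Yv a m u"
  have c: "f1 \<in> carrier S" "f2 \<in> carrier S" "y \<in> carrier S"
    and uu: "k1 \<in> Units S" "k2 \<in> Units S" "k3 \<in> Units S" "k4 \<in> Units S"
    by (simp_all add: f1_def f2_def y_def k1_def k2_def k3_def k4_def)
  have kr': "k4 \<otimes> k3 = (k1 \<otimes> k2) \<otimes> y" using kr by (simp add: k1_def k2_def k3_def k4_def y_def)
  have "(f1 \<otimes> inv k1) \<otimes> (f2 \<otimes> inv k2) = y \<otimes> ((f1 \<otimes> inv k3) \<otimes> (f2 \<otimes> inv k4))"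
  proof -
    have l: "(f1 \<otimes> inv k1) \<otimes> (f2 \<otimes> inv k2) = (f1 \<otimes> f2) \<otimes> inv (k1 \<otimes> k2)"
      using c uu by (simp add: frac_mult)
    have r0: "(f1 \<otimes> inv k3) \<otimes> (f2 \<otimes> inv k4) = (f1 \<otimes> f2) \<otimes> inv (k3 \<otimes> k4)"
      using c uu by (simp add: frac_mult)
    have r: "y \<otimes> ((f1 \<otimes> inv k3) \<otimes> (f2 \<otimes> inv k4)) = (y \<otimes> (f1 \<otimes> f2)) \<otimes> inv (k3 \<otimes> k4)"
      unfolding r0 using c uu by (simp add: m_assoc)
    have "(f1 \<otimes> f2) \<otimes> (k3 \<otimes> k4) = (y \<otimes> (f1 \<otimes> f2)) \<otimes> (k1 \<otimes> k2)"
    proof -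
      have "(f1 \<otimes> f2) \<otimes> (k3 \<otimes> k4) = (f1 \<otimes> f2) \<otimes> (k4 \<otimes> k3)"
        using c uu by (simp add: m_comm Units_closed)
      also have "\<dots> = (f1 \<otimes> f2) \<otimes> ((k1 \<otimes> k2) \<otimes> y)" by (simp add: kr')
      also have "\<dots> = (y \<otimes> (f1 \<otimes> f2)) \<otimes> (k1 \<otimes> k2)"
        using c uu Units_closed[OF uu(1)] Units_closed[OF uu(2)] by algebra
      finally show ?thesis .
    qed
    then show ?thesis unfolding l r using c uu by (subst frac_eq) simp_all
  qed
  then show ?thesis
    unfolding tt_def i1 i2 f1_def[symmetric] f2_def[symmetric] k1_def[symmetric] k2_def[symmetric]
      k3_def[symmetric] k4_def[symmetric] y_def[symmetric]
    by simp
qed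

lemma E_bot:
  assumes "2 \<le> a" "a \<le> r"
  shows "tt 1 a 0 = tt 0 (a-1) 0"
proof -
  have "mns a" using assms by (simp add: mns_def)
  moreover have "cm a = \<one>" using assms by (simp add: cm_def)
  ultimately show ?thesis using assms by (simp add: tt_def FF_def F1_def)
qed

lemma E_left:
  assumes "1 \<le> m" "m + 2 \<le> l"
  shows "tt 1 0 m = tt 0 0 (m+1)"
proof -
  have p: "pls m" using assms by (simp add: pls_def)
  have cp: "cp m = K 1 m 0 \<otimes> inv (K 0 (m + 1) 0)" using assms by (simp add: cp_def)
  have "tt 0 0 (m+1) = (F1 m \<otimes> inv (cp m)) \<otimes> inv (K 0 (m+1) 0)"
    by (simp add: tt_def FF_def F0_Suc[OF p])
  also have "\<dots> = F1 m \<otimes> inv (K 1 m 0)"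
    unfolding cp inv_frac[OF KU KU]
    by (rule frac_cancel2) simp_all
  finally show ?thesis by (simp add: tt_def FF_def)
qed

lemma E_top:
  assumes "1 \<le> a" "a + 1 \<le> r"
  shows "tt 1 a l = tt 0 (a+1) l"
proof -
  have p: "pls (a + l)" using assms by (simp add: pls_def)
  have cp: "cp (a + l) = K 1 l (int a) \<otimes> inv (K 0 l (int a + 1))"
    using assms rl by (simp add: cp_def)
  have "tt 0 (a+1) l = (F1 (a + l) \<otimes> inv (cp (a + l))) \<otimes> inv (K 0 l (int a + 1))"
    by (simp add: tt_def FF_def F0_Suc[OF p, symmetric] add_ac)
  also have "\<dots> = F1 (a + l) \<otimes> inv (K 1 l (int a))"
    unfolding cp inv_frac[OF KU KU]
    by (rule frac_cancel2) simp_all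
  finally show ?thesis by (simp add: tt_def FF_def)
qed

lemma E_right:
  assumes "2 \<le> m" "m + 1 \<le> l"
  shows "tt 1 (r+1) m = tt 0 (r+1) (m-1)"
proof -
  have mi: "mns (r + 1 + m)" using assms by (simp add: mns_def)
  have cm: "cm (r + 1 + m) = K 1 m (int r + 1) \<otimes> inv (K 0 (m - 1) (int r + 1))"
    using assms by (simp add: cm_def)
  have e: "r + 1 + m - 1 = r + 1 + (m - 1)" using assms by simp
  have i: "int (r + 1) = int r + 1" by simp
  have "tt 1 (r+1) m = (F0 (r + 1 + (m - 1)) \<otimes> cm (r + 1 + m)) \<otimes> inv (K 1 m (int r + 1))"
    unfolding tt_def FF_def F1_def i using mi e by simp
  also have "\<dots> = F0 (r + 1 + (m - 1)) \<otimes> inv (K 0 (m - 1) (int r + 1))"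
    unfolding cm
    by (rule frac_cancel2) simp_all
  also have "\<dots> = tt 0 (r+1) (m-1)"
    unfolding tt_def FF_def i by simp
  finally show ?thesis .
qed

end




context ysys begin

definition NN :: nat where "NN = 2 * (r + l + 1)"

definition pos :: "nat \<Rightarrow> nat \<Rightarrow> nat" where
  "pos a m = (if m = 0 then r + 1 - a else if a = 0 then r + 1 + m
     else if m = l then r + 1 + l + a else NN - m)"

definition G :: "nat \<Rightarrow> 'a" where
  "G k = (if k = 0 then tt 1 (r+1) 1
     else if k \<le> r then tt 0 (r + 1 - k) 0
     else if k = r + 1 then tt 1 1 0
     else if k \<le> r + l then tt 0 0 (k - r - 1)
     else if k = r + l + 1 then tt 1 0 (l - 1)
     else if k \<le> 2 * r + l + 1 then tt 0 (k - r - l - 1) l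
     else if k = 2 * r + l + 2 then tt 1 r l
     else tt 0 (r + 1) (NN - k))"

lemma GU[simp]: "G k \<in> Units S" by (simp add: G_def)

definition bval :: "int \<Rightarrow> nat \<Rightarrow> nat \<Rightarrow> 'a" where
  "bval u a m = G (nat ((u + int (pos a m)) mod int NN))"

lemma bvalU[simp]: "bval u a m \<in> Units S" by (simp add: bval_def)

lemma edge_cases:
  assumes "a \<le> r + 1" "m \<le> l" "\<not> intr r l a m" "\<not> ((a = 0 \<or> a = r + 1) \<and> (m = 0 \<or> m = l))"
  shows "(m = 0 \<and> 1 \<le> a \<and> a \<le> r) \<or> (a = 0 \<and> 1 \<le> m \<and> m + 1 \<le> l)
     \<or> (m = l \<and> 1 \<le> a \<and> a \<le> r) \<or> (a = r + 1 \<and> 1 \<le> m \<and> m + 1 \<le> l)"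
  using assms by (auto simp: intr_def)

lemma B0:
  assumes "a \<le> r + 1" "m \<le> l" "\<not> intr r l a m" "\<not> ((a = 0 \<or> a = r + 1) \<and> (m = 0 \<or> m = l))"
  shows "bval 0 a m = tt 0 a m"
proof -
  have p: "pos a m < NN" using assms rl by (auto simp: pos_def NN_def)
  then have e: "nat ((0 + int (pos a m)) mod int NN) = pos a m" by simp
  show ?thesis unfolding bval_def e
    using edge_cases[OF assms] rl
    by (elim disjE) (auto simp: pos_def G_def NN_def)
qed

lemma B1:
  assumes "a \<le> r + 1" "m \<le> l" "\<not> intr r l a m" "\<not> ((a = 0 \<or> a = r + 1) \<and> (m = 0 \<or> m = l))"
  shows "bval 1 a m = tt 1 a m"
  using edge_cases[OF assms]
proof (elim disjE)
  assume h: "m = 0 \<and> 1 \<le> a \<and> a \<le> r"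
  have p: "pos a m = r + 1 - a" using h by (simp add: pos_def)
  have e: "nat ((1 + int (pos a m)) mod int NN) = r + 2 - a"
    using h rl unfolding p NN_def by (simp add: of_nat_diff)
  show ?thesis
  proof (cases "a = 1")
    case True then show ?thesis using h unfolding bval_def e by (simp add: G_def)
  next
    case False
    then have k: "r + 2 - a \<noteq> 0" "r + 2 - a \<le> r" "r + 1 - (r + 2 - a) = a - 1" using h by auto
    then have "G (r + 2 - a) = tt 0 (a - 1) 0" unfolding G_def by simp
    then show ?thesis using h False E_bot[of a] unfolding bval_def e by simp
  qed
next
  assume h: "a = 0 \<and> 1 \<le> m \<and> m + 1 \<le> l"
  have p: "pos a m = r + 1 + m" using h by (simp add: pos_def)
  have e: "nat ((1 + int (pos a m)) mod int NN) = r + 2 + m"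
    using h rl unfolding p NN_def by simp
  show ?thesis
  proof (cases "m + 1 = l")
    case True
    then have "l - 1 = m" by simp
    then show ?thesis using h True unfolding bval_def e by (simp add: G_def)
  next
    case False
    then have "G (r + 2 + m) = tt 0 0 (m + 1)" using h by (simp add: G_def)
    then show ?thesis using h False E_left[of m] unfolding bval_def e by simp
  qed
next
  assume h: "m = l \<and> 1 \<le> a \<and> a \<le> r"
  have p: "pos a m = r + 1 + l + a" using h rl by (simp add: pos_def)
  have e: "nat ((1 + int (pos a m)) mod int NN) = r + 2 + l + a"
    using h rl unfolding p NN_def by simp
  show ?thesis
  proof (cases "a = r")
    case True then show ?thesis using h unfolding bval_def e by (simp add: G_def)
  next
    case False
    then have "G (r + 2 + l + a) = tt 0 (a + 1) l" using h by (simp add: G_def)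
    then show ?thesis using h False E_top[of a] unfolding bval_def e by simp
  qed
next
  assume h: "a = r + 1 \<and> 1 \<le> m \<and> m + 1 \<le> l"
  have p: "pos a m = NN - m" using h rl by (simp add: pos_def)
  show ?thesis
  proof (cases "m = 1")
    case True
    have e: "nat ((1 + int (pos a m)) mod int NN) = 0"
      using h rl True unfolding p NN_def by (simp add: of_nat_diff)
    show ?thesis using h True unfolding bval_def e by (simp add: G_def)
  next
    case False
    have e: "nat ((1 + int (pos a m)) mod int NN) = NN + 1 - m"
      using h rl False unfolding p NN_def by (simp add: of_nat_diff)
    have k: "NN + 1 - m \<noteq> 0" "\<not> NN + 1 - m \<le> r" "NN + 1 - m \<noteq> r + 1" "\<not> NN + 1 - m \<le> r + l"
      "NN + 1 - m \<noteq> r + l + 1" "\<not> NN + 1 - m \<le> 2 * r + l + 1" "NN + 1 - m \<noteq> 2 * r + l + 2"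
      "NN - (NN + 1 - m) = m - 1"
      using h False rl by (auto simp: NN_def)
    have "G (NN + 1 - m) = tt 0 (r + 1) (m - 1)" unfolding G_def using k by simp
    then show ?thesis using h False E_right[of m] unfolding bval_def e by simp
  qed
qed

end




context ysys begin

definition nb :: "int \<Rightarrow> (nat \<Rightarrow> nat \<Rightarrow> 'a) \<Rightarrow> nat \<Rightarrow> nat \<Rightarrow> 'a" where
  "nb u cur a m = (if intr r l a m then cur a m else bval u a m)"

definition step :: "int \<Rightarrow> (nat \<Rightarrow> nat \<Rightarrow> 'a) \<Rightarrow> (nat \<Rightarrow> nat \<Rightarrow> 'a) \<Rightarrow> nat \<Rightarrow> nat \<Rightarrow> 'a" where
  "step u prev cur a m = ((nb u cur a (m-1) \<otimes> nb u cur a (m+1)) \<otimes> (\<one> \<oplus> Yv a m u)) \<otimes> inv (prev a m)"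

primrec fwd :: "nat \<Rightarrow> (nat \<Rightarrow> nat \<Rightarrow> 'a) \<times> (nat \<Rightarrow> nat \<Rightarrow> 'a)" where
  "fwd 0 = (tt 0, tt 1)"
| "fwd (Suc n) = (snd (fwd n), step (int n + 1) (fst (fwd n)) (snd (fwd n)))"

primrec bwd :: "nat \<Rightarrow> (nat \<Rightarrow> nat \<Rightarrow> 'a) \<times> (nat \<Rightarrow> nat \<Rightarrow> 'a)" where
  "bwd 0 = (tt 1, tt 0)"
| "bwd (Suc n) = (snd (bwd n), step (- int n) (fst (bwd n)) (snd (bwd n)))"

definition Sl :: "int \<Rightarrow> nat \<Rightarrow> nat \<Rightarrow> 'a" where
  "Sl u = (if 0 \<le> u then fst (fwd (nat u)) else snd (bwd (nat (- u))))"

lemma Sl_fst: "fst (fwd n) = Sl (int n)" by (simp add: Sl_def)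
lemma Sl_snd: "snd (fwd n) = Sl (int n + 1)"
proof -
  have "snd (fwd n) = fst (fwd (Suc n))" by simp
  also have "\<dots> = Sl (int (Suc n))" by (rule Sl_fst)
  finally show ?thesis by (simp add: add.commute)
qed
lemma Sl0: "Sl 0 = tt 0" by (simp add: Sl_def)
lemma Sl1: "Sl 1 = tt 1" using Sl_snd[of 0] by simp

lemma Sl_bsnd: "snd (bwd n) = Sl (- int n)"
proof (cases n)
  case 0 then show ?thesis by (simp add: Sl0)
next
  case (Suc k)
  have "nat (int k + 1) = Suc k" by simp
  then show ?thesis using Suc by (simp add: Sl_def)
qed

lemma Sl_bfst: "fst (bwd n) = Sl (1 - int n)"
proof (cases n)
  case 0 then show ?thesis by (simp add: Sl1)
next
  case (Suc k)
  then have "fst (bwd n) = snd (bwd k)" by simp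
  then show ?thesis using Suc by (simp add: Sl_bsnd)
qed

lemma Sl_up: "Sl (int n + 2) = step (int n + 1) (Sl (int n)) (Sl (int n + 1))"
proof -
  have e: "int (Suc n) + 1 = int n + 2" by simp
  have "Sl (int n + 2) = snd (fwd (Suc n))" unfolding Sl_snd[of "Suc n"] e ..
  then show ?thesis by (simp add: Sl_fst Sl_snd)
qed

lemma Sl_down: "Sl (- int n - 1) = step (- int n) (Sl (1 - int n)) (Sl (- int n))"
proof -
  have e: "- int (Suc n) = - int n - 1" by simp
  have "Sl (- int n - 1) = snd (bwd (Suc n))" unfolding Sl_bsnd[of "Suc n"] e ..
  then show ?thesis by (simp add: Sl_bfst Sl_bsnd)
qed

lemma Sl_rec:
  "(1 \<le> u \<and> Sl (u + 1) = step u (Sl (u - 1)) (Sl u)) \<or> (u \<le> 0 \<and> Sl (u - 1) = step u (Sl (u + 1)) (Sl u))"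
proof (cases "1 \<le> u")
  case True
  define n where "n = nat (u - 1)"
  have u: "u = int n + 1" using True by (simp add: n_def)
  show ?thesis using Sl_up[of n] True unfolding u by (simp add: add.assoc)
next
  case False
  define n where "n = nat (- u)"
  have u: "u = - int n" using False by (simp add: n_def)
  show ?thesis using Sl_down[of n] False unfolding u by (simp add: algebra_simps)
qed

definition tau :: "nat \<Rightarrow> nat \<Rightarrow> int \<Rightarrow> 'a" where
  "tau a m u = (if intr r l a m then Sl u a m else if a \<le> r + 1 \<and> m \<le> l then bval u a m else \<one>)"

lemma step_unit:
  assumes "intr r l a m" "\<And>a m. intr r l a m \<Longrightarrow> p a m \<in> Units S"
    "\<And>a m. intr r l a m \<Longrightarrow> c a m \<in> Units S"
  shows "step u p c a m \<in> Units S"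
  using assms P_unit[OF assms(1)] by (simp add: step_def nb_def)

lemma fwd_unit: "intr r l a m \<Longrightarrow> fst (fwd n) a m \<in> Units S \<and> snd (fwd n) a m \<in> Units S"
proof (induction n arbitrary: a m)
  case 0 then show ?case by simp
next
  case (Suc n) then show ?case by (simp add: step_unit)
qed

lemma bwd_unit: "intr r l a m \<Longrightarrow> fst (bwd n) a m \<in> Units S \<and> snd (bwd n) a m \<in> Units S"
proof (induction n arbitrary: a m)
  case 0 then show ?case by simp
next
  case (Suc n) then show ?case by (simp add: step_unit)
qed

lemma SlU: "intr r l a m \<Longrightarrow> Sl u a m \<in> Units S"
  using fwd_unit bwd_unit by (simp add: Sl_def)

lemma tauU[simp]: "tau a m u \<in> Units S"
  by (simp add: tau_def SlU)
lemma tauC[simp]: "tau a m u \<in> carrier S"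
  by (rule Units_closed[OF tauU])

lemma nb_tau: "a \<le> r + 1 \<Longrightarrow> m \<le> l \<Longrightarrow> nb u (Sl u) a m = tau a m u"
  by (simp add: nb_def tau_def)

lemma tau_B:
  assumes "intr r l a m"
  shows "tau a m (u-1) \<otimes> tau a m (u+1) = (tau a (m-1) u \<otimes> tau a (m+1) u) \<otimes> (\<one> \<oplus> Yv a m u)"
proof -
  from assms have b: "a \<le> r + 1" "m - 1 \<le> l" "m + 1 \<le> l" by (auto simp: intr_def)
  define X where "X = (tau a (m-1) u \<otimes> tau a (m+1) u) \<otimes> (\<one> \<oplus> Yv a m u)"
  have X: "X \<in> carrier S" unfolding X_def using P_unit[OF assms] by (simp add: Units_closed)
  have st: "step u p (Sl u) a m = X \<otimes> inv (p a m)" for p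
    unfolding step_def X_def using b by (simp add: nb_tau)
  have ta: "tau a m w = Sl w a m" for w using assms by (simp add: tau_def)
  from Sl_rec[of u] show ?thesis
  proof
    assume "1 \<le> u \<and> Sl (u + 1) = step u (Sl (u - 1)) (Sl u)"
    then have "tau a m (u+1) = X \<otimes> inv (tau a m (u-1))" by (simp add: ta st)
    then have "tau a m (u-1) \<otimes> tau a m (u+1) = X" using X by (simp add: unit_div_cancel(2))
    then show ?thesis by (simp add: X_def)
  next
    assume "u \<le> 0 \<and> Sl (u - 1) = step u (Sl (u + 1)) (Sl u)"
    then have "tau a m (u-1) = X \<otimes> inv (tau a m (u+1))" by (simp add: ta st)
    then have "tau a m (u-1) \<otimes> tau a m (u+1) = X" using X by (simp add: unit_div_cancel(1))
    then show ?thesis by (simp add: X_def)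
  qed
qed

lemma tau_bd: "a \<le> r + 1 \<Longrightarrow> m \<le> l \<Longrightarrow> \<not> intr r l a m \<Longrightarrow> tau a m u = bval u a m"
  by (simp add: tau_def)

lemma NN_pos: "0 < NN" by (simp add: NN_def)

lemma sp1: "1 \<le> a \<Longrightarrow> a \<le> r + 1 \<Longrightarrow> tau a 0 (u+1) = tau (a-1) 0 u"
  by (simp add: tau_bd intr_def bval_def pos_def algebra_simps of_nat_diff)

lemma sp2: "a \<le> r \<Longrightarrow> tau a l (u+1) = tau (a+1) l u"
  using rl by (simp add: tau_bd intr_def bval_def pos_def algebra_simps)

lemma sp3: "m + 1 \<le> l \<Longrightarrow> tau 0 m (u+1) = tau 0 (m+1) u"
  using rl by (simp add: tau_bd intr_def bval_def pos_def algebra_simps)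

lemma sp4: "1 \<le> m \<Longrightarrow> m \<le> l \<Longrightarrow> tau (r+1) m (u+1) = tau (r+1) (m-1) u"
proof -
  assume m: "1 \<le> m" "m \<le> l"
  have p1: "pos (r+1) m = NN - m" using m rl by (auto simp: pos_def NN_def)
  have e: "(u + 1 + int (NN - m)) mod int NN = (u + int (pos (r+1) (m-1))) mod int NN"
  proof (cases "m = 1")
    case True
    then have "pos (r+1) (m-1) = 0" by (simp add: pos_def)
    moreover have "u + 1 + int (NN - m) = u + int NN" using True NN_pos by simp
    ultimately show ?thesis by (simp only: mod_add_self2) simp
  next
    case False
    then have "pos (r+1) (m-1) = NN - (m - 1)" using m rl by (auto simp: pos_def NN_def)
    moreover have "u + 1 + int (NN - m) = u + int (NN - (m - 1))" using False m rl by (simp add: NN_def)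
    ultimately show ?thesis by (simp only:)
  qed
  show ?thesis using m e p1 by (simp add: tau_bd intr_def bval_def)
qed

end




lemma (in cring) core_cancel:
  assumes c: "x2 \<in> carrier R" "y1 \<in> carrier R" "y2 \<in> carrier R" "z1 \<in> carrier R" "z2 \<in> carrier R"
    "M \<in> carrier R" "P \<in> carrier R" "J \<in> carrier R" and u: "x1 \<in> Units R"
  and h1: "x1 \<otimes> x2 = M \<otimes> P" and h2: "(z1 \<otimes> z2) \<otimes> J = M" and h3: "y1 \<otimes> y2 = P \<otimes> J"
  and h4: "x1 = y1 \<otimes> z1"
  shows "x2 = y2 \<otimes> z2"
proof -
  have x1: "x1 \<in> carrier R" using u by auto
  have "x1 \<otimes> x2 = ((z1 \<otimes> z2) \<otimes> J) \<otimes> P" by (simp add: h1 h2)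
  also have "\<dots> = (z1 \<otimes> z2) \<otimes> (P \<otimes> J)" using c by algebra
  also have "\<dots> = (z1 \<otimes> z2) \<otimes> (y1 \<otimes> y2)" by (simp add: h3)
  also have "\<dots> = (y1 \<otimes> z1) \<otimes> (y2 \<otimes> z2)" using c by algebra
  also have "\<dots> = x1 \<otimes> (y2 \<otimes> z2)" by (simp add: h4)
  finally have "x1 \<otimes> x2 = x1 \<otimes> (y2 \<otimes> z2)" .
  then show ?thesis using u c by simp
qed

lemma (in cring) swap4:
  assumes "a1 \<in> carrier R" "b1 \<in> carrier R" "a2 \<in> carrier R" "b2 \<in> carrier R"
  shows "(a1 \<otimes> b1) \<otimes> (a2 \<otimes> b2) = (a1 \<otimes> a2) \<otimes> (b1 \<otimes> b2)"
  using assms by algebra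

context ysys begin

lemma tau_slice0:
  assumes "a \<le> r + 1" "m \<le> l" "\<not> ((a = 0 \<or> a = r + 1) \<and> (m = 0 \<or> m = l))"
  shows "tau a m 0 = tt 0 a m"
  using assms B0[OF assms(1,2) _ assms(3)] by (auto simp: tau_def Sl0)

lemma tau_slice1:
  assumes "a \<le> r + 1" "m \<le> l" "\<not> ((a = 0 \<or> a = r + 1) \<and> (m = 0 \<or> m = l))"
  shows "tau a m 1 = tt 1 a m"
  using assms B1[OF assms(1,2) _ assms(3)] by (auto simp: tau_def Sl1)

definition Aok :: "int \<Rightarrow> bool" where
  "Aok u \<longleftrightarrow> (\<forall>a m. intr r l a m \<longrightarrow>
     tau (a-1) m u \<otimes> tau (a+1) m u = Yv a m u \<otimes> (tau a (m-1) u \<otimes> tau a (m+1) u))"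

lemma Aok0: "Aok 0"
  unfolding Aok_def
proof (intro allI impI)
  fix a m assume i: "intr r l a m"
  then have b: "1 \<le> a" "a \<le> r" "1 \<le> m" "m + 1 \<le> l" by (auto simp: intr_def)
  have e: "tau (a-1) m 0 = tt 0 (a-1) m" "tau (a+1) m 0 = tt 0 (a+1) m"
    "tau a (m-1) 0 = tt 0 a (m-1)" "tau a (m+1) 0 = tt 0 a (m+1)"
    using b by (auto intro!: tau_slice0)
  show "tau (a-1) m 0 \<otimes> tau (a+1) m 0 = Yv a m 0 \<otimes> (tau a (m-1) 0 \<otimes> tau a (m+1) 0)"
    unfolding e by (rule tt_A[OF i])
qed

lemma Aok1: "Aok 1"
  unfolding Aok_def
proof (intro allI impI)
  fix a m assume i: "intr r l a m"
  then have b: "1 \<le> a" "a \<le> r" "1 \<le> m" "m + 1 \<le> l" by (auto simp: intr_def)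
  have e: "tau (a-1) m 1 = tt 1 (a-1) m" "tau (a+1) m 1 = tt 1 (a+1) m"
    "tau a (m-1) 1 = tt 1 a (m-1)" "tau a (m+1) 1 = tt 1 a (m+1)"
    using b by (auto intro!: tau_slice1)
  show "tau (a-1) m 1 \<otimes> tau (a+1) m 1 = Yv a m 1 \<otimes> (tau a (m-1) 1 \<otimes> tau a (m+1) 1)"
    unfolding e by (rule tt_A[OF i])
qed

lemma BB:
  assumes "a \<le> r + 1" "1 \<le> m" "m + 1 \<le> l"
  shows "tau a m (u-1) \<otimes> tau a m (u+1) = (tau a (m-1) u \<otimes> tau a (m+1) u) \<otimes> yP S r Yv a m u"
proof (cases "a = 0 \<or> a = r + 1")
  case True
  have "tau a m (u-1) \<otimes> tau a m (u+1) = tau a (m-1) u \<otimes> tau a (m+1) u"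
  proof (cases "a = 0")
    case True
    have "tau 0 (m-1) ((u-1)+1) = tau 0 (m-1+1) (u-1)" using assms by (intro sp3) simp
    moreover have "tau 0 m (u+1) = tau 0 (m+1) u" using assms by (intro sp3) simp
    ultimately show ?thesis using True assms by (simp add: m_comm)
  next
    case False
    then have a: "a = r+1" using \<open>a = 0 \<or> a = r+1\<close> by simp
    have "tau (r+1) (m+1) ((u-1)+1) = tau (r+1) (m+1-1) (u-1)" using assms by (intro sp4) simp_all
    moreover have "tau (r+1) m (u+1) = tau (r+1) (m-1) u" using assms by (intro sp4) simp_all
    ultimately show ?thesis using a assms by (simp add: m_comm)
  qed
  then show ?thesis using True by (simp add: yP_def)
next
  case False
  then have i: "intr r l a m" using assms by (auto simp: intr_def)
  show ?thesis using tau_B[OF i] False by (simp add: yP_def)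
qed

lemma CC:
  assumes A: "Aok u" and b: "1 \<le> a" "a \<le> r" "m \<le> l"
  shows "(tau a m (u-1) \<otimes> tau a m (u+1)) \<otimes> yJ S l Yv a m u = tau (a-1) m u \<otimes> tau (a+1) m u"
proof (cases "m = 0 \<or> m = l")
  case True
  have "tau a m (u-1) \<otimes> tau a m (u+1) = tau (a-1) m u \<otimes> tau (a+1) m u"
  proof (cases "m = 0")
    case True
    have "tau (a+1) 0 ((u-1)+1) = tau (a+1-1) 0 (u-1)" using b by (intro sp1) simp_all
    moreover have "tau a 0 (u+1) = tau (a-1) 0 u" using b by (intro sp1) simp_all
    ultimately show ?thesis using True b by (simp add: m_comm)
  next
    case False
    then have mm: "m = l" using \<open>m = 0 \<or> m = l\<close> by simp
    have "tau (a-1) l ((u-1)+1) = tau (a-1+1) l (u-1)" using b by (intro sp2) simp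
    moreover have "tau a l (u+1) = tau (a+1) l u" using b by (intro sp2) simp
    ultimately show ?thesis using mm b by (simp add: m_comm)
  qed
  then show ?thesis using True by (simp add: yJ_def)
next
  case False
  then have i: "intr r l a m" using b by (auto simp: intr_def)
  have pu: "\<one> \<oplus> Yv a m u \<in> Units S" by (rule P_unit[OF i])
  have "(tau a m (u-1) \<otimes> tau a m (u+1)) \<otimes> yJ S l Yv a m u
     = ((tau a (m-1) u \<otimes> tau a (m+1) u) \<otimes> (\<one> \<oplus> Yv a m u)) \<otimes> (Yv a m u \<otimes> inv (\<one> \<oplus> Yv a m u))"
    using False by (simp add: tau_B[OF i] yJ_def)
  also have "\<dots> = Yv a m u \<otimes> (tau a (m-1) u \<otimes> tau a (m+1) u)"
  proof -
    have "((tau a (m-1) u \<otimes> tau a (m+1) u) \<otimes> (\<one> \<oplus> Yv a m u)) \<otimes> (Yv a m u \<otimes> inv (\<one> \<oplus> Yv a m u))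
      = (Yv a m u \<otimes> (tau a (m-1) u \<otimes> tau a (m+1) u)) \<otimes> ((\<one> \<oplus> Yv a m u) \<otimes> inv (\<one> \<oplus> Yv a m u))"
      using pu Units_closed[OF pu] Units_inv_closed[OF pu]
      by (simp add: m_ac del: Units_r_inv Units_l_inv)
    also have "\<dots> = Yv a m u \<otimes> (tau a (m-1) u \<otimes> tau a (m+1) u)" using pu by simp
    finally show ?thesis .
  qed
  also have "\<dots> = tau (a-1) m u \<otimes> tau (a+1) m u"
    using A i unfolding Aok_def by simp
  finally show ?thesis .
qed

lemma prop_facts:
  assumes A: "Aok u" and i: "intr r l a m"
  shows "(tau (a-1) m (u-1) \<otimes> tau (a+1) m (u-1)) \<otimes> (tau (a-1) m (u+1) \<otimes> tau (a+1) m (u+1))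
      = ((tau (a-1) (m-1) u \<otimes> tau (a-1) (m+1) u) \<otimes> (tau (a+1) (m-1) u \<otimes> tau (a+1) (m+1) u))
        \<otimes> (yP S r Yv (a-1) m u \<otimes> yP S r Yv (a+1) m u)"
    and "((tau a (m-1) (u-1) \<otimes> tau a (m+1) (u-1)) \<otimes> (tau a (m-1) (u+1) \<otimes> tau a (m+1) (u+1)))
        \<otimes> (yJ S l Yv a (m-1) u \<otimes> yJ S l Yv a (m+1) u)
      = ((tau (a-1) (m-1) u \<otimes> tau (a-1) (m+1) u) \<otimes> (tau (a+1) (m-1) u \<otimes> tau (a+1) (m+1) u))"
proof -
  from i have b: "1 \<le> a" "a \<le> r" "1 \<le> m" "m + 1 \<le> l" by (auto simp: intr_def)
  have yPC: "yP S r Yv a' m' u' \<in> carrier S" for a' m' u'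
  proof (cases "a' = 0 \<or> a' = r + 1")
    case False
    then show ?thesis by (simp add: yP_def)
  qed (auto simp: yP_def)
  have yJC: "yJ S l Yv a' m' u' \<in> carrier S" if "intr r l a' m' \<or> m' = 0 \<or> m' = l" for a' m' u'
    using that P_unit[of a' m'] by (auto simp: yJ_def)
  have BB1: "tau (a-1) m (u-1) \<otimes> tau (a-1) m (u+1) = (tau (a-1) (m-1) u \<otimes> tau (a-1) (m+1) u) \<otimes> yP S r Yv (a-1) m u"
    using b by (intro BB) auto
  have BB2: "tau (a+1) m (u-1) \<otimes> tau (a+1) m (u+1) = (tau (a+1) (m-1) u \<otimes> tau (a+1) (m+1) u) \<otimes> yP S r Yv (a+1) m u"
    using b by (intro BB) auto
  show "(tau (a-1) m (u-1) \<otimes> tau (a+1) m (u-1)) \<otimes> (tau (a-1) m (u+1) \<otimes> tau (a+1) m (u+1))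
      = ((tau (a-1) (m-1) u \<otimes> tau (a-1) (m+1) u) \<otimes> (tau (a+1) (m-1) u \<otimes> tau (a+1) (m+1) u))
        \<otimes> (yP S r Yv (a-1) m u \<otimes> yP S r Yv (a+1) m u)"
    by (simp only: swap4 tauC yPC m_closed BB1 BB2)
  have jm1: "intr r l a (m-1) \<or> m - 1 = 0 \<or> m - 1 = l" using b by (auto simp: intr_def)
  have jp1: "intr r l a (m+1) \<or> m + 1 = 0 \<or> m + 1 = l" using b by (auto simp: intr_def)
  have CC1: "(tau a (m-1) (u-1) \<otimes> tau a (m-1) (u+1)) \<otimes> yJ S l Yv a (m-1) u = tau (a-1) (m-1) u \<otimes> tau (a+1) (m-1) u"
    using b by (intro CC[OF A]) auto
  have CC2: "(tau a (m+1) (u-1) \<otimes> tau a (m+1) (u+1)) \<otimes> yJ S l Yv a (m+1) u = tau (a-1) (m+1) u \<otimes> tau (a+1) (m+1) u"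
    using b by (intro CC[OF A]) auto
  have "((tau a (m-1) (u-1) \<otimes> tau a (m+1) (u-1)) \<otimes> (tau a (m-1) (u+1) \<otimes> tau a (m+1) (u+1)))
        \<otimes> (yJ S l Yv a (m-1) u \<otimes> yJ S l Yv a (m+1) u)
      = ((tau a (m-1) (u-1) \<otimes> tau a (m-1) (u+1)) \<otimes> yJ S l Yv a (m-1) u)
        \<otimes> ((tau a (m+1) (u-1) \<otimes> tau a (m+1) (u+1)) \<otimes> yJ S l Yv a (m+1) u)"
    by (simp only: swap4 tauC yJC[OF jm1] yJC[OF jp1] m_closed)
  also have "\<dots> = (tau (a-1) (m-1) u \<otimes> tau (a+1) (m-1) u) \<otimes> (tau (a-1) (m+1) u \<otimes> tau (a+1) (m+1) u)"
    by (simp only: CC1 CC2)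
  also have "\<dots> = ((tau (a-1) (m-1) u \<otimes> tau (a-1) (m+1) u) \<otimes> (tau (a+1) (m-1) u \<otimes> tau (a+1) (m+1) u))"
    by (simp only: swap4 tauC)
  finally show "((tau a (m-1) (u-1) \<otimes> tau a (m+1) (u-1)) \<otimes> (tau a (m-1) (u+1) \<otimes> tau a (m+1) (u+1)))
        \<otimes> (yJ S l Yv a (m-1) u \<otimes> yJ S l Yv a (m+1) u)
      = ((tau (a-1) (m-1) u \<otimes> tau (a-1) (m+1) u) \<otimes> (tau (a+1) (m-1) u \<otimes> tau (a+1) (m+1) u))" .
qed

end




context ysys begin

lemma yPC[simp]: "yP S r Yv a' m' u' \<in> carrier S"
  by (cases "a' = 0 \<or> a' = r + 1") (auto simp: yP_def)

lemma yJC: "intr r l a' m' \<or> m' = 0 \<or> m' = l \<Longrightarrow> yJ S l Yv a' m' u' \<in> carrier S"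
  using P_unit[of a' m'] by (auto simp: yJ_def)

lemma prop_up: "Aok (u-1) \<Longrightarrow> Aok u \<Longrightarrow> Aok (u+1)"
  unfolding Aok_def[of "u+1"]
proof (intro allI impI)
  fix a m assume A1: "Aok (u-1)" and A: "Aok u" and i: "intr r l a m"
  from i have b: "1 \<le> a" "a \<le> r" "1 \<le> m" "m + 1 \<le> l" by (auto simp: intr_def)
  have jm1: "intr r l a (m-1) \<or> m - 1 = 0 \<or> m - 1 = l" using b by (auto simp: intr_def)
  have jp1: "intr r l a (m+1) \<or> m + 1 = 0 \<or> m + 1 = l" using b by (auto simp: intr_def)
  note pf = prop_facts[OF A i]
  show "tau (a-1) m (u+1) \<otimes> tau (a+1) m (u+1) = Yv a m (u+1) \<otimes> (tau a (m-1) (u+1) \<otimes> tau a (m+1) (u+1))"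
    apply (rule core_cancel[OF _ _ _ _ _ _ _ _ _ pf(1) pf(2) ysys[OF i]])
    using A1 i yJC[OF jm1] yJC[OF jp1] unfolding Aok_def by simp_all
qed

lemma prop_down: "Aok (u+1) \<Longrightarrow> Aok u \<Longrightarrow> Aok (u-1)"
  unfolding Aok_def[of "u-1"]
proof (intro allI impI)
  fix a m assume A1: "Aok (u+1)" and A: "Aok u" and i: "intr r l a m"
  from i have b: "1 \<le> a" "a \<le> r" "1 \<le> m" "m + 1 \<le> l" by (auto simp: intr_def)
  have jm1: "intr r l a (m-1) \<or> m - 1 = 0 \<or> m - 1 = l" using b by (auto simp: intr_def)
  have jp1: "intr r l a (m+1) \<or> m + 1 = 0 \<or> m + 1 = l" using b by (auto simp: intr_def)
  note pf = prop_facts[OF A i]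
  have h1: "(tau (a-1) m (u+1) \<otimes> tau (a+1) m (u+1)) \<otimes> (tau (a-1) m (u-1) \<otimes> tau (a+1) m (u-1))
      = ((tau (a-1) (m-1) u \<otimes> tau (a-1) (m+1) u) \<otimes> (tau (a+1) (m-1) u \<otimes> tau (a+1) (m+1) u))
        \<otimes> (yP S r Yv (a-1) m u \<otimes> yP S r Yv (a+1) m u)"
    using pf(1) by (simp add: m_comm)
  have h2: "((tau a (m-1) (u+1) \<otimes> tau a (m+1) (u+1)) \<otimes> (tau a (m-1) (u-1) \<otimes> tau a (m+1) (u-1)))
        \<otimes> (yJ S l Yv a (m-1) u \<otimes> yJ S l Yv a (m+1) u)
      = ((tau (a-1) (m-1) u \<otimes> tau (a-1) (m+1) u) \<otimes> (tau (a+1) (m-1) u \<otimes> tau (a+1) (m+1) u))"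
    using pf(2) by (simp add: m_comm)
  have h3: "Yv a m (u+1) \<otimes> Yv a m (u-1) = (yP S r Yv (a-1) m u \<otimes> yP S r Yv (a+1) m u) \<otimes> (yJ S l Yv a (m-1) u \<otimes> yJ S l Yv a (m+1) u)"
    using ysys[OF i, of u] by (simp add: m_comm)
  show "tau (a-1) m (u-1) \<otimes> tau (a+1) m (u-1) = Yv a m (u-1) \<otimes> (tau a (m-1) (u-1) \<otimes> tau a (m+1) (u-1))"
    apply (rule core_cancel[OF _ _ _ _ _ _ _ _ _ h1 h2 h3])
    using A1 i yJC[OF jm1] yJC[OF jp1] unfolding Aok_def by simp_all
qed

lemma Aok_all: "Aok u"
proof -
  have up: "Aok (int n) \<and> Aok (int n + 1)" for n
  proof (induction n)
    case 0 then show ?case using Aok0 Aok1 by simp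
  next
    case (Suc n)
    then have "Aok (int n + 1 + 1)" using prop_up[of "int n + 1"] by simp
    then show ?case using Suc by (simp add: add.commute)
  qed
  have down: "Aok (- int n) \<and> Aok (1 - int n)" for n
  proof (induction n)
    case 0 then show ?case using Aok0 Aok1 by simp
  next
    case (Suc n)
    then have "Aok (- int n - 1)" using prop_down[of "- int n"] by simp
    moreover have e: "- int (Suc n) = - int n - 1" "1 - int (Suc n) = - int n" by simp_all
    ultimately show ?case unfolding e using Suc by blast
  qed
  show ?thesis
  proof (cases "0 \<le> u")
    case True
    then show ?thesis using up[of "nat u"] by simp
  next
    case False
    then show ?thesis using down[of "nat (- u)"] by simp
  qed
qed

lemma tau_A:
  assumes "intr r l a m"
  shows "tau (a-1) m u \<otimes> tau (a+1) m u = Yv a m u \<otimes> (tau a (m-1) u \<otimes> tau a (m+1) u)"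
  using Aok_all[of u] assms unfolding Aok_def by blast

lemma tau_T:
  assumes "intr r l a m"
  shows "tau a m (u-1) \<otimes> tau a m (u+1) = tau a (m-1) u \<otimes> tau a (m+1) u \<oplus> tau (a-1) m u \<otimes> tau (a+1) m u"
proof -
  have "tau a m (u-1) \<otimes> tau a m (u+1) = (tau a (m-1) u \<otimes> tau a (m+1) u) \<otimes> (\<one> \<oplus> Yv a m u)"
    by (rule tau_B[OF assms])
  also have "\<dots> = tau a (m-1) u \<otimes> tau a (m+1) u \<oplus> Yv a m u \<otimes> (tau a (m-1) u \<otimes> tau a (m+1) u)"
    using tauC[of a "m-1" u] tauC[of a "m+1" u] YC[of a m u] by algebra
  finally show ?thesis unfolding tau_A[OF assms] .
qed

lemma tau_Y:
  assumes "intr r l a m"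
  shows "(tau (a-1) m u \<otimes> tau (a+1) m u) \<otimes> inv (tau a (m-1) u \<otimes> tau a (m+1) u) = Yv a m u"
  unfolding tau_A[OF assms] by (rule unit_div_cancel(3)) simp_all

end




section \<open>Concrete rings\<close>

lemma Tring_cring: "cring (Tring r l)" unfolding Tring_def by (rule pr_cring)
lemma Yring_cring: "cring (Yring r l)" unfolding Yring_def by (rule pr_cring)

definition Tf :: "nat \<Rightarrow> nat \<Rightarrow> nat \<Rightarrow> nat \<Rightarrow> int \<Rightarrow> tgen rexpr set" where
  "Tf r l a m u = (if a \<le> r + 1 \<and> m \<le> l then Tcls r l a m u else \<one>\<^bsub>Tring r l\<^esub>)"

definition Yf :: "nat \<Rightarrow> nat \<Rightarrow> nat \<Rightarrow> nat \<Rightarrow> int \<Rightarrow> ygen rexpr set" where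
  "Yf r l a m u = (if inI r l a m then Ycls r l a m u else \<one>\<^bsub>Yring r l\<^esub>)"

lemma Tcls_carrier: "a \<le> r + 1 \<Longrightarrow> m \<le> l \<Longrightarrow> Tcls r l a m u \<in> carrier (Tring r l)"
  unfolding Tcls_def Tring_def by (rule pr_carrierI) (auto simp: Tgens_def inH_def)

lemma Tinv_carrier: "a \<le> r + 1 \<Longrightarrow> m \<le> l \<Longrightarrow> rclass (Trels r l) (Gen (TGinv a m u)) \<in> carrier (Tring r l)"
  unfolding Tring_def by (rule pr_carrierI) (auto simp: Tgens_def inH_def)

lemma Tcls_inv_mult: "a \<le> r + 1 \<Longrightarrow> m \<le> l \<Longrightarrow>
   Tcls r l a m u \<otimes>\<^bsub>Tring r l\<^esub> rclass (Trels r l) (Gen (TGinv a m u)) = \<one>\<^bsub>Tring r l\<^esub>"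
  unfolding Tring_def Tcls_def pr_mult pr_one rclass_eq_iff
  by (rule req.rel) (auto simp: Trels_def inH_def)

lemma Tcls_unit: "a \<le> r + 1 \<Longrightarrow> m \<le> l \<Longrightarrow> Tcls r l a m u \<in> Units (Tring r l)"
  using cring.inv_eqI(2)[OF Tring_cring Tcls_carrier Tinv_carrier Tcls_inv_mult] by blast

lemma Tf_unit: "Tf r l a m u \<in> Units (Tring r l)"
proof -
  interpret TR: cring "Tring r l" by (rule Tring_cring)
  show ?thesis using Tcls_unit by (simp add: Tf_def)
qed

lemma Tf_in: "a \<le> r + 1 \<Longrightarrow> m \<le> l \<Longrightarrow> Tf r l a m u = Tcls r l a m u"
  by (simp add: Tf_def)

lemma T_tsys_rel:
  assumes "1 \<le> a" "a \<le> r" "1 \<le> m" "m \<le> l - 1"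
  shows "Tcls r l a m (u-1) \<otimes>\<^bsub>Tring r l\<^esub> Tcls r l a m (u+1) =
    Tcls r l a (m-1) u \<otimes>\<^bsub>Tring r l\<^esub> Tcls r l a (m+1) u \<oplus>\<^bsub>Tring r l\<^esub> Tcls r l (a-1) m u \<otimes>\<^bsub>Tring r l\<^esub> Tcls r l (a+1) m u"
  unfolding Tring_def Tcls_def pr_mult pr_add rclass_eq_iff
  by (rule req.rel) (unfold Trels_def, use assms in blast)

lemma T_sp1: "1 \<le> a \<Longrightarrow> a \<le> r + 1 \<Longrightarrow> Tcls r l a 0 (u+1) = Tcls r l (a-1) 0 u"
  unfolding Tcls_def rclass_eq_iff by (rule req.rel) (unfold Trels_def, blast)
lemma T_sp2: "a \<le> r \<Longrightarrow> Tcls r l a l (u+1) = Tcls r l (a+1) l u"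
  unfolding Tcls_def rclass_eq_iff by (rule req.rel) (unfold Trels_def, blast)
lemma T_sp3: "m \<le> l - 1 \<Longrightarrow> Tcls r l 0 m (u+1) = Tcls r l 0 (m+1) u"
  unfolding Tcls_def rclass_eq_iff by (rule req.rel) (unfold Trels_def, blast)
lemma T_sp4: "1 \<le> m \<Longrightarrow> m \<le> l \<Longrightarrow> Tcls r l (r+1) m (u+1) = Tcls r l (r+1) (m-1) u"
  unfolding Tcls_def rclass_eq_iff by (rule req.rel) (unfold Trels_def, blast)

lemma tsys_inst:
  assumes "1 \<le> r" "2 \<le> l"
  shows "tsys (Tring r l) r l (Tf r l)"
proof (intro tsys.intro tsys_axioms.intro)
  show "cring (Tring r l)" by (rule Tring_cring)
  show "1 \<le> r" "2 \<le> l" by fact+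
  show "Tf r l a m u \<in> Units (Tring r l)" for a m u by (rule Tf_unit)
  show "Tf r l a m (u-1) \<otimes>\<^bsub>Tring r l\<^esub> Tf r l a m (u+1) =
    Tf r l a (m-1) u \<otimes>\<^bsub>Tring r l\<^esub> Tf r l a (m+1) u \<oplus>\<^bsub>Tring r l\<^esub> Tf r l (a-1) m u \<otimes>\<^bsub>Tring r l\<^esub> Tf r l (a+1) m u"
    if "1 \<le> a" "a \<le> r" "1 \<le> m" "m \<le> l - 1" for a m u
    using that T_tsys_rel[OF that] by (simp add: Tf_in)
  show "Tf r l a 0 (u+1) = Tf r l (a-1) 0 u" if "1 \<le> a" "a \<le> r+1" for a u
    using that T_sp1[OF that] by (simp add: Tf_in)
  show "Tf r l a l (u+1) = Tf r l (a+1) l u" if "a \<le> r" for a u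
    using that T_sp2[OF that] by (simp add: Tf_in)
  show "Tf r l 0 m (u+1) = Tf r l 0 (m+1) u" if "m \<le> l - 1" for m u
    using that T_sp3[OF that] assms by (simp add: Tf_in)
  show "Tf r l (r+1) m (u+1) = Tf r l (r+1) (m-1) u" if "1 \<le> m" "m \<le> l" for m u
    using that T_sp4[OF that] by (simp add: Tf_in)
qed




lemma inI_intr: "inI r l a m \<longleftrightarrow> intr r l a m"
  by (auto simp: inI_def intr_def)

lemma Ygen_carrier: "inI r l a m \<Longrightarrow> rclass (Yrels r l) (Gen (YG a m u)) \<in> carrier (Yring r l)"
  "inI r l a m \<Longrightarrow> rclass (Yrels r l) (Gen (YGinv a m u)) \<in> carrier (Yring r l)"
  "inI r l a m \<Longrightarrow> rclass (Yrels r l) (Gen (WG a m u)) \<in> carrier (Yring r l)"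
  unfolding Yring_def by (rule pr_carrierI; auto simp: Ygens_def)+

lemma Ycls_carrier: "inI r l a m \<Longrightarrow> Ycls r l a m u \<in> carrier (Yring r l)"
  unfolding Ycls_def by (rule Ygen_carrier)

lemma Ycls_inv_mult: "inI r l a m \<Longrightarrow>
   Ycls r l a m u \<otimes>\<^bsub>Yring r l\<^esub> rclass (Yrels r l) (Gen (YGinv a m u)) = \<one>\<^bsub>Yring r l\<^esub>"
  unfolding Yring_def Ycls_def pr_mult pr_one rclass_eq_iff
  by (rule req.rel) (auto simp: Yrels_def)

lemma Ycls_W_mult: "inI r l a m \<Longrightarrow>
   (\<one>\<^bsub>Yring r l\<^esub> \<oplus>\<^bsub>Yring r l\<^esub> Ycls r l a m u) \<otimes>\<^bsub>Yring r l\<^esub> rclass (Yrels r l) (Gen (WG a m u)) = \<one>\<^bsub>Yring r l\<^esub>"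
  unfolding Yring_def Ycls_def pr_mult pr_one pr_add rclass_eq_iff
  by (rule req.rel) (auto simp: Yrels_def)

lemma Ycls_unit: "inI r l a m \<Longrightarrow> Ycls r l a m u \<in> Units (Yring r l)"
  using cring.inv_eqI(2)[OF Yring_cring Ycls_carrier Ygen_carrier(2) Ycls_inv_mult] by blast

lemma Yinv_eq: "inI r l a m \<Longrightarrow> rclass (Yrels r l) (Gen (YGinv a m u)) = inv\<^bsub>Yring r l\<^esub> Ycls r l a m u"
  using cring.inv_eqI(1)[OF Yring_cring Ycls_carrier Ygen_carrier(2) Ycls_inv_mult] by blast

lemma onePY_carrier: "inI r l a m \<Longrightarrow> \<one>\<^bsub>Yring r l\<^esub> \<oplus>\<^bsub>Yring r l\<^esub> Ycls r l a m u \<in> carrier (Yring r l)"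
proof -
  interpret YR: cring "Yring r l" by (rule Yring_cring)
  show "inI r l a m \<Longrightarrow> ?thesis" using Ycls_carrier by simp
qed

lemma W_unit: "inI r l a m \<Longrightarrow> \<one>\<^bsub>Yring r l\<^esub> \<oplus>\<^bsub>Yring r l\<^esub> Ycls r l a m u \<in> Units (Yring r l)"
  using cring.inv_eqI(2)[OF Yring_cring onePY_carrier Ygen_carrier(3) Ycls_W_mult] by blast

lemma W_eq: "inI r l a m \<Longrightarrow> rclass (Yrels r l) (Gen (WG a m u)) = inv\<^bsub>Yring r l\<^esub> (\<one>\<^bsub>Yring r l\<^esub> \<oplus>\<^bsub>Yring r l\<^esub> Ycls r l a m u)"
  using cring.inv_eqI(1)[OF Yring_cring onePY_carrier Ygen_carrier(3) Ycls_W_mult] by blast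

lemma Yf_unit: "Yf r l a m u \<in> Units (Yring r l)"
proof -
  interpret YR: cring "Yring r l" by (rule Yring_cring)
  show ?thesis using Ycls_unit by (simp add: Yf_def)
qed

lemma yP_eq:
  assumes "a \<le> r + 1" "1 \<le> m" "m \<le> l - 1"
  shows "yP (Yring r l) r (Yf r l) a m u = rclass (Yrels r l) (onePY r l a m u)"
proof (cases "a = 0 \<or> a = r + 1")
  case True then show ?thesis by (simp add: yP_def onePY_def Yring_def pr_one)
next
  case False
  then have i: "inI r l a m" using assms by (auto simp: inI_def)
  then show ?thesis using False
    by (simp add: yP_def onePY_def Yf_def Ycls_def Yring_def pr_one pr_add)
qed

lemma yJ_eq:
  assumes "1 \<le> a" "a \<le> r" "m \<le> l"
  shows "yJ (Yring r l) l (Yf r l) a m u = rclass (Yrels r l) (invOnePYinv r l a m u)"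
proof (cases "m = 0 \<or> m = l")
  case True then show ?thesis by (simp add: yJ_def invOnePYinv_def Yring_def pr_one)
next
  case False
  then have i: "inI r l a m" using assms by (auto simp: inI_def)
  have "yJ (Yring r l) l (Yf r l) a m u = Ycls r l a m u \<otimes>\<^bsub>Yring r l\<^esub> rclass (Yrels r l) (Gen (WG a m u))"
    using False i by (simp add: yJ_def Yf_def W_eq[OF i])
  then show ?thesis using False
    by (simp add: invOnePYinv_def Ycls_def Yring_def pr_mult)
qed

lemma ysys_inst:
  assumes "1 \<le> r" "2 \<le> l"
  shows "ysys (Yring r l) r l (Yf r l)"
proof (intro ysys.intro ysys_axioms.intro)
  show "cring (Yring r l)" by (rule Yring_cring)
  show "1 \<le> r" "2 \<le> l" by fact+
  show "Yf r l a m u \<in> Units (Yring r l)" for a m u by (rule Yf_unit)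
  show "\<one>\<^bsub>Yring r l\<^esub> \<oplus>\<^bsub>Yring r l\<^esub> Yf r l a m u \<in> Units (Yring r l)" if "intr r l a m" for a m u
    using that W_unit[of r l a m u] by (simp add: Yf_def inI_intr)
  show "Yf r l a m (u-1) \<otimes>\<^bsub>Yring r l\<^esub> Yf r l a m (u+1) =
      (yP (Yring r l) r (Yf r l) (a-1) m u \<otimes>\<^bsub>Yring r l\<^esub> yP (Yring r l) r (Yf r l) (a+1) m u) \<otimes>\<^bsub>Yring r l\<^esub>
      (yJ (Yring r l) l (Yf r l) a (m-1) u \<otimes>\<^bsub>Yring r l\<^esub> yJ (Yring r l) l (Yf r l) a (m+1) u)"
    if "intr r l a m" for a m u
  proof -
    from that have i: "inI r l a m" and b: "1 \<le> a" "a \<le> r" "1 \<le> m" "m \<le> l - 1"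
      by (auto simp: inI_intr[symmetric] inI_def)
    have e1: "yP (Yring r l) r (Yf r l) (a-1) m u = rclass (Yrels r l) (onePY r l (a-1) m u)"
      by (rule yP_eq) (use b in auto)
    have e2: "yP (Yring r l) r (Yf r l) (a+1) m u = rclass (Yrels r l) (onePY r l (a+1) m u)"
      by (rule yP_eq) (use b in auto)
    have e3: "yJ (Yring r l) l (Yf r l) a (m-1) u = rclass (Yrels r l) (invOnePYinv r l a (m-1) u)"
      by (rule yJ_eq) (use b in auto)
    have e4: "yJ (Yring r l) l (Yf r l) a (m+1) u = rclass (Yrels r l) (invOnePYinv r l a (m+1) u)"
      by (rule yJ_eq) (use b in auto)
    note e = e1 e2 e3 e4
    have yf: "Yf r l a m w = Ycls r l a m w" for w using i by (simp add: Yf_def)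
    show ?thesis unfolding e yf unfolding Ycls_def Yring_def pr_mult rclass_eq_iff
      by (rule req.rel) (unfold Yrels_def, use i in blast)
  qed
qed




theorem proposition5p9:
  fixes r l :: nat
  assumes "r \<ge> 1" and "l \<ge> 2"
  shows "\<exists>\<phi>. \<phi> \<in> ring_hom (Yring r l) (Tring r l) \<and>
           (\<forall>a m u. 1 \<le> a \<and> a \<le> r \<and> 1 \<le> m \<and> m \<le> l - 1 \<longrightarrow>
              \<phi> (Ycls r l a m u) =
                (Tcls r l (a - 1) m u \<otimes>\<^bsub>Tring r l\<^esub> Tcls r l (a + 1) m u) \<otimes>\<^bsub>Tring r l\<^esub>
                inv\<^bsub>Tring r l\<^esub> (Tcls r l a (m - 1) u \<otimes>\<^bsub>Tring r l\<^esub> Tcls r l a (m + 1) u)) \<and>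
           (\<exists>\<psi>. \<psi> \<in> ring_hom (Tring r l) (Yring r l) \<and>
              (\<forall>y \<in> carrier (Yring r l). \<psi> (\<phi> y) = y))"
proof -
  interpret TR: cring "Tring r l" by (rule Tring_cring)
  interpret YR: cring "Yring r l" by (rule Yring_cring)
  interpret TS: tsys "Tring r l" r l "Tf r l" by (rule tsys_inst[OF assms])
  interpret YS: ysys "Yring r l" r l "Yf r l" by (rule ysys_inst[OF assms])
  define hphi where "hphi = (\<lambda>g. case g of
      YG a m u \<Rightarrow> if inI r l a m then TS.pY a m u else \<one>\<^bsub>Tring r l\<^esub>
    | YGinv a m u \<Rightarrow> if inI r l a m then inv\<^bsub>Tring r l\<^esub> (TS.pY a m u) else \<one>\<^bsub>Tring r l\<^esub>
    | WG a m u \<Rightarrow> if inI r l a m then TS.pW a m u else \<one>\<^bsub>Tring r l\<^esub>)"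
  have inI_b: "inI r l a m \<Longrightarrow> 1 \<le> a \<and> a \<le> r \<and> 1 \<le> m \<and> m \<le> l - 1" for a m
    by (simp add: inI_def)
  have hphi_c: "hphi g \<in> carrier (Tring r l)" for g
  proof (cases g)
    case (YG a m u) then show ?thesis
      using TS.pY_unit[of a m u] inI_b[of a m] by (auto simp: hphi_def)
  next
    case (YGinv a m u) then show ?thesis
      using TS.pY_unit[of a m u] inI_b[of a m] by (auto simp: hphi_def)
  next
    case (WG a m u) then show ?thesis
      using TS.onepY_unit[of a m u] inI_b[of a m] by (auto simp: hphi_def TS.pW_def)
  qed
  have ev_P: "evalr (Tring r l) hphi (onePY r l a m u) = TS.pP a m u"
    if "a \<le> r + 1" "1 \<le> m" "m \<le> l - 1" for a m u
  proof (cases "a = 0 \<or> a = r + 1")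
    case True then show ?thesis by (simp add: onePY_def TS.pP_def)
  next
    case False
    then have "inI r l a m" using that by (auto simp: inI_def)
    then show ?thesis using False by (simp add: onePY_def TS.pP_def hphi_def)
  qed
  have ev_J: "evalr (Tring r l) hphi (invOnePYinv r l a m u) = TS.pJ a m u"
    if "1 \<le> a" "a \<le> r" "m \<le> l" for a m u
  proof (cases "m = 0 \<or> m = l")
    case True then show ?thesis by (simp add: invOnePYinv_def TS.pJ_def)
  next
    case False
    then have "inI r l a m" using that by (auto simp: inI_def)
    then show ?thesis using False by (simp add: invOnePYinv_def TS.pJ_def hphi_def)
  qed
  have hphi_rel: "evalr (Tring r l) hphi x = evalr (Tring r l) hphi y" if "(x, y) \<in> Yrels r l" for x y
    using that unfolding Yrels_def
  proof (elim UnE CollectE exE conjE)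
    fix a m u assume e: "(x, y) = (RMul (Y a m u) (Gen (YGinv a m u)), ROne)" and i: "inI r l a m"
    then show ?thesis using TS.pY_unit[of a m u] inI_b[OF i] by (simp add: hphi_def)
  next
    fix a m u assume e: "(x, y) = (RMul (RAdd ROne (Y a m u)) (Gen (WG a m u)), ROne)" and i: "inI r l a m"
    then show ?thesis using TS.onepY_unit[of a m u] inI_b[OF i] by (simp add: hphi_def TS.pW_def)
  next
    fix a m u assume e: "(x, y) = (RMul (Y a m (u - 1)) (Y a m (u + 1)),
        RMul (RMul (onePY r l (a - 1) m u) (onePY r l (a + 1) m u))
             (RMul (invOnePYinv r l a (m - 1) u) (invOnePYinv r l a (m + 1) u)))"
      and i: "inI r l a m"
    from inI_b[OF i] have b: "1 \<le> a" "a \<le> r" "1 \<le> m" "m \<le> l - 1" by auto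
    have ee: "evalr (Tring r l) hphi (onePY r l (a - 1) m u) = TS.pP (a-1) m u"
      "evalr (Tring r l) hphi (onePY r l (a + 1) m u) = TS.pP (a+1) m u"
      "evalr (Tring r l) hphi (invOnePYinv r l a (m - 1) u) = TS.pJ a (m-1) u"
      "evalr (Tring r l) hphi (invOnePYinv r l a (m + 1) u) = TS.pJ a (m+1) u"
      by (rule ev_P ev_J; use b in auto)+
    have "evalr (Tring r l) hphi x = TS.pY a m (u-1) \<otimes>\<^bsub>Tring r l\<^esub> TS.pY a m (u+1)"
      using e i by (simp add: hphi_def)
    also have "\<dots> = (TS.pP (a-1) m u \<otimes>\<^bsub>Tring r l\<^esub> TS.pP (a+1) m u) \<otimes>\<^bsub>Tring r l\<^esub>
        (TS.pJ a (m-1) u \<otimes>\<^bsub>Tring r l\<^esub> TS.pJ a (m+1) u)"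
      by (rule TS.Ysys_phi[OF b])
    also have "\<dots> = evalr (Tring r l) hphi y" using e by (simp only: ee evalr.simps prod.inject)
    finally show ?thesis .
  qed
  define phi where "phi = liftr (Tring r l) (Yrels r l) hphi"
  have phi_hom: "phi \<in> ring_hom (Yring r l) (Tring r l)"
    unfolding phi_def Yring_def by (rule TR.liftr_hom[OF hphi_c hphi_rel])
  have phi_gen: "phi (rclass (Yrels r l) (Gen g)) = hphi g" for g
    unfolding phi_def by (simp add: TR.liftr_class[OF hphi_c hphi_rel])
  have phi_Y: "phi (Ycls r l a m u) =
      (Tcls r l (a - 1) m u \<otimes>\<^bsub>Tring r l\<^esub> Tcls r l (a + 1) m u) \<otimes>\<^bsub>Tring r l\<^esub>
      inv\<^bsub>Tring r l\<^esub> (Tcls r l a (m - 1) u \<otimes>\<^bsub>Tring r l\<^esub> Tcls r l a (m + 1) u)"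
    if "1 \<le> a \<and> a \<le> r \<and> 1 \<le> m \<and> m \<le> l - 1" for a m u
  proof -
    have i: "inI r l a m" using that by (simp add: inI_def)
    have "phi (Ycls r l a m u) = TS.pY a m u" unfolding Ycls_def phi_gen using i by (simp add: hphi_def)
    also have "\<dots> = (Tcls r l (a - 1) m u \<otimes>\<^bsub>Tring r l\<^esub> Tcls r l (a + 1) m u) \<otimes>\<^bsub>Tring r l\<^esub>
      inv\<^bsub>Tring r l\<^esub> (Tcls r l a (m - 1) u \<otimes>\<^bsub>Tring r l\<^esub> Tcls r l a (m + 1) u)"
    proof -
      have "Tf r l (a-1) m u = Tcls r l (a-1) m u" "Tf r l (a+1) m u = Tcls r l (a+1) m u"
        "Tf r l a (m-1) u = Tcls r l a (m-1) u" "Tf r l a (m+1) u = Tcls r l a (m+1) u"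
        by (rule Tf_in; use that in auto)+
      then show ?thesis unfolding TS.pY_def by simp
    qed
    finally show ?thesis .
  qed
  define hpsi where "hpsi = (\<lambda>g. case g of
      TG a m u \<Rightarrow> YS.tau a m u
    | TGinv a m u \<Rightarrow> inv\<^bsub>Yring r l\<^esub> (YS.tau a m u))"
  have hpsi_c: "hpsi g \<in> carrier (Yring r l)" for g
    by (cases g) (simp_all add: hpsi_def)
  have hpsi_rel: "evalr (Yring r l) hpsi x = evalr (Yring r l) hpsi y" if "(x, y) \<in> Trels r l" for x y
    using that unfolding Trels_def
  proof (elim UnE CollectE exE conjE)
    fix a m u assume "(x, y) = (RMul (T a m u) (Gen (TGinv a m u)), ROne)"
    then show ?thesis by (simp add: hpsi_def)
  next
    fix a m u assume e: "(x, y) = (RMul (T a m (u - 1)) (T a m (u + 1)),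
        RAdd (RMul (T a (m - 1) u) (T a (m + 1) u)) (RMul (T (a - 1) m u) (T (a + 1) m u)))"
      and b: "1 \<le> a" "a \<le> r" "1 \<le> m" "m \<le> l - 1"
    have i: "intr r l a m" using b by (auto simp: intr_def)
    show ?thesis using e YS.tau_T[OF i, of u] by (simp add: hpsi_def)
  next
    fix a u assume e: "(x, y) = (T a 0 (u + 1), T (a - 1) 0 u)" and b: "1 \<le> a" "a \<le> r + 1"
    show ?thesis using e YS.sp1[OF b, of u] by (simp add: hpsi_def)
  next
    fix a u assume e: "(x, y) = (T a l (u + 1), T (a + 1) l u)" and b: "a \<le> r"
    show ?thesis using e YS.sp2[OF b, of u] by (simp add: hpsi_def)
  next
    fix m u assume e: "(x, y) = (T 0 m (u + 1), T 0 (m + 1) u)" and b: "m \<le> l - 1"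
    have b': "m + 1 \<le> l" using b assms by simp
    show ?thesis using e YS.sp3[OF b', of u] by (simp add: hpsi_def)
  next
    fix m u assume e: "(x, y) = (T (r + 1) m (u + 1), T (r + 1) (m - 1) u)" and b: "1 \<le> m" "m \<le> l"
    show ?thesis using e YS.sp4[OF b, of u] by (simp add: hpsi_def)
  qed
  define psi where "psi = liftr (Yring r l) (Trels r l) hpsi"
  have psi_hom: "psi \<in> ring_hom (Tring r l) (Yring r l)"
    unfolding psi_def Tring_def by (rule YR.liftr_hom[OF hpsi_c hpsi_rel])
  have psi_gen: "psi (rclass (Trels r l) (Gen g)) = hpsi g" for g
    unfolding psi_def by (simp add: YR.liftr_class[OF hpsi_c hpsi_rel])
  have psi_T: "psi (Tf r l a m u) = YS.tau a m u" if "a \<le> r + 1" "m \<le> l" for a m u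
    unfolding Tf_in[OF that] Tcls_def psi_gen by (simp add: hpsi_def)
  have psi_inv: "psi (inv\<^bsub>Tring r l\<^esub> x) = inv\<^bsub>Yring r l\<^esub> (psi x)" if "x \<in> Units (Tring r l)" for x
    by (rule ring_hom_inv[OF Tring_cring Yring_cring psi_hom that])
  have psi_pY: "psi (TS.pY a m u) = Ycls r l a m u" if i: "inI r l a m" for a m u
  proof -
    from inI_b[OF i] have b: "1 \<le> a" "a \<le> r" "1 \<le> m" "m \<le> l - 1" by auto
    have it: "intr r l a m" using i by (simp add: inI_intr)
    have "psi (TS.pY a m u) =
        (YS.tau (a-1) m u \<otimes>\<^bsub>Yring r l\<^esub> YS.tau (a+1) m u) \<otimes>\<^bsub>Yring r l\<^esub>
        inv\<^bsub>Yring r l\<^esub> (YS.tau a (m-1) u \<otimes>\<^bsub>Yring r l\<^esub> YS.tau a (m+1) u)"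
      unfolding TS.pY_def using b
      by (simp add: ring_hom_mult[OF psi_hom] psi_inv psi_T)
    also have "\<dots> = Yf r l a m u" by (rule YS.tau_Y[OF it])
    also have "\<dots> = Ycls r l a m u" using i by (simp add: Yf_def)
    finally show ?thesis .
  qed
  have comp_hom: "(psi \<circ> phi) \<in> ring_hom (presented_ring (Ygens r l) (Yrels r l)) (presented_ring (Ygens r l) (Yrels r l))"
    using ring_hom_trans[OF phi_hom psi_hom] by (simp add: Yring_def)
  have comp_gen: "(psi \<circ> phi) (rclass (Yrels r l) (Gen g)) = rclass (Yrels r l) (Gen g)" if "g \<in> Ygens r l" for g
    using that unfolding Ygens_def
  proof (elim UnE CollectE exE conjE)
    fix a m u assume g: "g = YG a m u" and i: "inI r l a m"
    show ?thesis using psi_pY[OF i] i unfolding g by (simp add: phi_gen hphi_def Ycls_def)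
  next
    fix a m u assume g: "g = YGinv a m u" and i: "inI r l a m"
    from inI_b[OF i] have b: "1 \<le> a" "a \<le> r" "1 \<le> m" "m \<le> l - 1" by auto
    show ?thesis using i unfolding g comp_def phi_gen
      by (simp add: hphi_def psi_inv TS.pY_unit[OF b] psi_pY Yinv_eq)
  next
    fix a m u assume g: "g = WG a m u" and i: "inI r l a m"
    from inI_b[OF i] have b: "1 \<le> a" "a \<le> r" "1 \<le> m" "m \<le> l - 1" by auto
    have "psi (\<one>\<^bsub>Tring r l\<^esub> \<oplus>\<^bsub>Tring r l\<^esub> TS.pY a m u) = \<one>\<^bsub>Yring r l\<^esub> \<oplus>\<^bsub>Yring r l\<^esub> Ycls r l a m u"
    proof -
      have c: "TS.pY a m u \<in> carrier (Tring r l)" using TS.pY_unit[OF b] by (rule TR.Units_closed)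
      have "psi (\<one>\<^bsub>Tring r l\<^esub> \<oplus>\<^bsub>Tring r l\<^esub> TS.pY a m u) = psi \<one>\<^bsub>Tring r l\<^esub> \<oplus>\<^bsub>Yring r l\<^esub> psi (TS.pY a m u)"
        by (rule ring_hom_add[OF psi_hom]) (simp_all add: c)
      then show ?thesis by (simp add: ring_hom_one[OF psi_hom] psi_pY[OF i])
    qed
    then show ?thesis using i unfolding g comp_def phi_gen
      by (simp add: hphi_def TS.pW_def psi_inv TS.onepY_unit[OF b] W_eq)
  qed
  have comp: "\<forall>y \<in> carrier (Yring r l). psi (phi y) = y"
  proof
    fix y assume "y \<in> carrier (Yring r l)"
    then have "(psi \<circ> phi) y = y"
      unfolding Yring_def using pr_hom_ext_id[OF comp_hom comp_gen] by blast
    then show "psi (phi y) = y" by simp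
  qed
  show ?thesis using phi_hom phi_Y psi_hom comp by blast
qed



end
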